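(* Let $(V_4,g)$ be a space-time whose Ricci tensor $R$ is of non-null electromagnetic type and whose Weyl tensor $W$ is of Petrov–Bel type D. Then $R$ and $W$ have aligned (i.e. coinciding) principal planes if and only if $$a\neq0,\qquad R^{\mu}{}_{(\lambda}\mathcal P_{\nu)\mu\gamma\delta}=0,\qquad \mathcal P\equiv\mathcal W+\frac ba\mathcal G,$$ where $\mathcal W=\frac12(W-i*W)$ is the self-dual Weyl tensor, $a=\mathrm{Tr}\mathcal W^2$, $b=\mathrm{Tr}\mathcal W^3$.
   Context: Signature $(-,+,+,+)$; curvature conventions as in Kramer et al. Round brackets on indices denote symmetrization. For double 2-forms, $(P\circ Q)^{\alpha\beta}{}_{\rho\sigma}=\frac12P^{\alpha\beta}{}_{\mu\nu}Q^{\mu\nu}{}_{\rho\sigma}$, $P^2=P\circ P$, $\mathrm{Tr}P=\frac12P^{\alpha\beta}{}_{\alpha\beta}$; $*W=\eta\circ W$ with $\eta$ the volume element; $G=\frac12g\wedge g$ with $(A\wedge B)_{\alpha\beta\mu\nu}=A_{\alpha\mu}B_{\beta\nu}+A_{\beta\nu}B_{\alpha\mu}-A_{\alpha\nu}B_{\beta\mu}-A_{\beta\mu}B_{\alpha\nu}$; $\mathcal G=\frac12(G-i\eta)$. $R$ is of non-null electromagnetic type if $R=-\kappa\Pi$ where $\kappa>0$ and $\Pi=v-h$, with $v=U^2$, $h=-( *U)^2$ for a simple unit 2-form $U$ (equivalently $\mathrm{tr}R=0$, $4R^2=(\mathrm{tr}R^2)g\neq0$, $R(x,x)>0$ for time-like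 $x$); its principal planes are the time-like plane $V$ with volume element $U$ and its orthogonal complement $H$. $W$ is of Petrov–Bel type D if $\mathcal W=3\rho\,\mathcal U\otimes\mathcal U+\rho\mathcal G$ with $\rho=-b/a$ and $\mathcal U=\frac1{\sqrt2}(U'-i*U')$ a normalized self-dual bivector ($U'$ a simple unit 2-form); its principal planes are the time-like plane with volume element $U'$ and its orthogonal complement. *)

theory Defs
  imports Complex_Main
begin

text \<open>Pointwise (tangent space at a point) tensor algebra in components with respect to an
arbitrary coordinate basis; all indices range over 0..3 and tensors are stored with all
indices down.\<close>

type_synonym vec = "nat \<Rightarrow> real"
type_synonym tens2 = "nat \<Rightarrow> nat \<Rightarrow> real"
type_synonym 'a tens4 = "nat \<Rightarrow> nat \<Rightarrow> nat \<Rightarrow> nat \<Rightarrow> 'a"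

abbreviation idx :: "nat set" where "idx \<equiv> {..<4}"

text \<open>Levi-Civita symbol with eps 0 1 2 3 = 1.\<close>
definition levi :: "nat \<Rightarrow> nat \<Rightarrow> nat \<Rightarrow> nat \<Rightarrow> real" where
  "levi a b c d = (let xs = [int a, int b, int c, int d] in
     (\<Prod>p \<in> {(i,j). i < j \<and> j < (4::nat)}. real_of_int (sgn (xs ! snd p - xs ! fst p))))"

definition det4 :: "tens2 \<Rightarrow> real" where
  "det4 g = (\<Sum>a\<in>idx. \<Sum>b\<in>idx. \<Sum>c\<in>idx. \<Sum>d\<in>idx.
               levi a b c d * g 0 a * g 1 b * g 2 c * g 3 d)"

definition minkowski :: "nat \<Rightarrow> nat \<Rightarrow> real" where
  "minkowski a b = (if a \<noteq> b then 0 else if a = 0 then -1 else 1)"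

definition lorentzian :: "tens2 \<Rightarrow> bool" where
  "lorentzian g \<longleftrightarrow> (\<forall>i<4. \<forall>j<4. g i j = g j i) \<and>
     (\<exists>e :: nat \<Rightarrow> nat \<Rightarrow> real. \<forall>a<4. \<forall>b<4.
        (\<Sum>\<mu>\<in>idx. \<Sum>\<nu>\<in>idx. g \<mu> \<nu> * e a \<mu> * e b \<nu>) = minkowski a b)"

definition ginv :: "tens2 \<Rightarrow> tens2" where
  "ginv g = (SOME h. \<forall>i<4. \<forall>k<4. (\<Sum>j\<in>idx. h i j * g j k) = (if i = k then 1 else 0))"

definition vol :: "tens2 \<Rightarrow> real tens4" where
  "vol g a b c d = sqrt (- det4 g) * levi a b c d"

definition ip :: "tens2 \<Rightarrow> vec \<Rightarrow> vec \<Rightarrow> real" where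
  "ip g x y = (\<Sum>\<mu>\<in>idx. \<Sum>\<nu>\<in>idx. g \<mu> \<nu> * x \<mu> * y \<nu>)"

definition lower :: "tens2 \<Rightarrow> vec \<Rightarrow> vec" where
  "lower g x a = (\<Sum>\<mu>\<in>idx. g a \<mu> * x \<mu>)"

definition wedge1 :: "vec \<Rightarrow> vec \<Rightarrow> tens2" where
  "wedge1 x y a b = x a * y b - y a * x b"

definition timelike_volume_form :: "tens2 \<Rightarrow> tens2 \<Rightarrow> vec \<Rightarrow> vec \<Rightarrow> bool" where
  "timelike_volume_form g U x y \<longleftrightarrow>
     ip g x x = -1 \<and> ip g y y = 1 \<and> ip g x y = 0 \<and>
     (\<forall>a<4. \<forall>b<4. U a b = wedge1 (lower g x) (lower g y) a b)"

definition in_plane :: "vec \<Rightarrow> vec \<Rightarrow> vec \<Rightarrow> bool" where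
  "in_plane x y v \<longleftrightarrow> (\<exists>s t. \<forall>i<4. v i = s * x i + t * y i)"

definition hodge2 :: "tens2 \<Rightarrow> tens2 \<Rightarrow> tens2" where
  "hodge2 g U a b = (1/2) * (\<Sum>k\<in>idx. \<Sum>l\<in>idx. \<Sum>m\<in>idx. \<Sum>n\<in>idx.
      vol g a b k l * ginv g k m * ginv g l n * U m n)"

definition sq2 :: "tens2 \<Rightarrow> tens2 \<Rightarrow> tens2" where
  "sq2 g U a b = (\<Sum>m\<in>idx. \<Sum>n\<in>idx. U a m * ginv g m n * U n b)"

text \<open>R = -kappa Pi, Pi = v - h, v = U^2, h = -( *U)^2, U time-like simple unit 2-form
with U = x /\ y.\<close>
definition nonnull_em :: "tens2 \<Rightarrow> tens2 \<Rightarrow> real \<Rightarrow> tens2 \<Rightarrow> vec \<Rightarrow> vec \<Rightarrow> bool" where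
  "nonnull_em g R \<kappa> U x y \<longleftrightarrow> 0 < \<kappa> \<and> timelike_volume_form g U x y \<and>
     (\<forall>a<4. \<forall>b<4. R a b = - \<kappa> * (sq2 g U a b - (- sq2 g (hodge2 g U) a b)))"

definition cplx :: "real tens4 \<Rightarrow> complex tens4" where
  "cplx T a b c d = complex_of_real (T a b c d)"

definition comp :: "tens2 \<Rightarrow> complex tens4 \<Rightarrow> complex tens4 \<Rightarrow> complex tens4" where
  "comp g P Q a b r s = (1/2) * (\<Sum>k\<in>idx. \<Sum>l\<in>idx. \<Sum>m\<in>idx. \<Sum>n\<in>idx.
      P a b k l * complex_of_real (ginv g k m * ginv g l n) * Q m n r s)"

definition trace4 :: "tens2 \<Rightarrow> complex tens4 \<Rightarrow> complex" where
  "trace4 g P = (1/2) * (\<Sum>a\<in>idx. \<Sum>b\<in>idx. \<Sum>m\<in>idx. \<Sum>n\<in>idx.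
      complex_of_real (ginv g a m * ginv g b n) * P m n a b)"

text \<open>G = 1/2 g /\ g, i.e. G_{abmn} = g_{am} g_{bn} - g_{an} g_{bm}.\<close>
definition Gt :: "tens2 \<Rightarrow> real tens4" where
  "Gt g a b m n = g a m * g b n - g a n * g b m"

definition calG :: "tens2 \<Rightarrow> complex tens4" where
  "calG g a b c d = (1/2) * (cplx (Gt g) a b c d - \<i> * cplx (vol g) a b c d)"

definition dual4 :: "tens2 \<Rightarrow> real tens4 \<Rightarrow> complex tens4" where
  "dual4 g W = comp g (cplx (vol g)) (cplx W)"

definition sdW :: "tens2 \<Rightarrow> real tens4 \<Rightarrow> complex tens4" where
  "sdW g W a b c d = (1/2) * (cplx W a b c d - \<i> * dual4 g W a b c d)"

definition inv_a :: "tens2 \<Rightarrow> real tens4 \<Rightarrow> complex" where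
  "inv_a g W = trace4 g (comp g (sdW g W) (sdW g W))"

definition inv_b :: "tens2 \<Rightarrow> real tens4 \<Rightarrow> complex" where
  "inv_b g W = trace4 g (comp g (sdW g W) (comp g (sdW g W) (sdW g W)))"

definition weyl_tensor :: "tens2 \<Rightarrow> real tens4 \<Rightarrow> bool" where
  "weyl_tensor g W \<longleftrightarrow> (\<forall>a<4. \<forall>b<4. \<forall>c<4. \<forall>d<4.
      W a b c d = - W b a c d \<and> W a b c d = - W a b d c \<and> W a b c d = W c d a b \<and>
      W a b c d + W a c d b + W a d b c = 0) \<and>
    (\<forall>b<4. \<forall>d<4. (\<Sum>a\<in>idx. \<Sum>c\<in>idx. ginv g a c * W a b c d) = 0)"

definition typeD :: "tens2 \<Rightarrow> real tens4 \<Rightarrow> complex \<Rightarrow> tens2 \<Rightarrow> vec \<Rightarrow> vec \<Rightarrow> bool" where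
  "typeD g W \<rho> U' x' y' \<longleftrightarrow> timelike_volume_form g U' x' y' \<and>
     inv_a g W \<noteq> 0 \<and> \<rho> = - inv_b g W / inv_a g W \<and>
     (let cU = (\<lambda>a b. (complex_of_real (U' a b) - \<i> * complex_of_real (hodge2 g U' a b))
                      / complex_of_real (sqrt 2)) in
      \<forall>a<4. \<forall>b<4. \<forall>c<4. \<forall>d<4.
        sdW g W a b c d = 3 * \<rho> * cU a b * cU c d + \<rho> * calG g a b c d)"

end

theory Submission
  imports Defs "Jordan_Normal_Form.Determinant"
begin

lemma left_right_inv4:
  fixes A B :: "nat \<Rightarrow> nat \<Rightarrow> real"
  assumes "\<forall>i<4. \<forall>k<4. (\<Sum>j\<in>idx. A i j * B j k) = (if i = k then 1 else 0)"
  shows "\<forall>i<4. \<forall>k<4. (\<Sum>j\<in>idx. B i j * A j k) = (if i = k then 1 else 0)"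
proof -
  let ?A = "mat 4 4 (\<lambda>(i,j). A i j)" and ?B = "mat 4 4 (\<lambda>(i,j). B i j)"
  have AB: "?A * ?B = 1\<^sub>m 4"
    by (rule eq_matI) (auto simp: scalar_prod_def atLeast0LessThan assms)
  have BA: "?B * ?A = 1\<^sub>m 4"
    by (rule mat_mult_left_right_inverse[OF _ _ AB]) auto
  show ?thesis
  proof (intro allI impI)
    fix i k :: nat assume "i < 4" "k < 4"
    have "(?B * ?A) $$ (i,k) = 1\<^sub>m 4 $$ (i,k)" using BA by simp
    thus "(\<Sum>j\<in>idx. B i j * A j k) = (if i = k then 1 else 0)"
      using \<open>i<4\<close> \<open>k<4\<close> by (simp add: scalar_prod_def atLeast0LessThan)
  qed
qed



lemma sum4: "(\<Sum>i\<in>idx. f i) = f 0 + f 1 + f 2 + f (3::nat)"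
  by (simp add: lessThan_nat_numeral eval_nat_numeral add.commute add.left_commute)

lemma mink_sq: "a < 4 \<Longrightarrow> b < 4 \<Longrightarrow> minkowski a a * minkowski a b = (if a = b then 1 else 0)"
  by (simp add: minkowski_def)

lemma lor_frame:
  assumes "lorentzian g"
  obtains e where "\<forall>a<4. \<forall>b<4. (\<Sum>\<mu>\<in>idx. \<Sum>\<nu>\<in>idx. g \<mu> \<nu> * e a \<mu> * e b \<nu>) = minkowski a b"
    and "\<forall>i<4. \<forall>k<4. (\<Sum>j\<in>idx. e j i * (minkowski j j * (\<Sum>l\<in>idx. e j l * g l k))) = (if i = k then 1 else 0)"
proof -
  from assms obtain e where e: "\<forall>a<4. \<forall>b<4. (\<Sum>\<mu>\<in>idx. \<Sum>\<nu>\<in>idx. g \<mu> \<nu> * e a \<mu> * e b \<nu>) = minkowski a b"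
    unfolding lorentzian_def by blast
  have "\<forall>i<4. \<forall>k<4. (\<Sum>j\<in>idx. (minkowski i i * (\<Sum>l\<in>idx. e i l * g l j)) * e k j) = (if i = k then 1 else 0)"
  proof (intro allI impI)
    fix i k :: nat assume ik: "i < 4" "k < 4"
    have "(\<Sum>j\<in>idx. (minkowski i i * (\<Sum>l\<in>idx. e i l * g l j)) * e k j)
        = minkowski i i * (\<Sum>l\<in>idx. \<Sum>j\<in>idx. g l j * e i l * e k j)"
      apply (simp add: sum_distrib_left sum_distrib_right)
      apply (subst sum.swap)
      apply (simp add: mult_ac)
      done
    also have "\<dots> = minkowski i i * minkowski i k" using e ik by simp
    finally show "(\<Sum>j\<in>idx. (minkowski i i * (\<Sum>l\<in>idx. e i l * g l j)) * e k j) = (if i = k then 1 else 0)"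
      using mink_sq ik by simp
  qed
  from left_right_inv4[OF this] have "\<forall>i<4. \<forall>k<4. (\<Sum>j\<in>idx. e j i * (minkowski j j * (\<Sum>l\<in>idx. e j l * g l k))) = (if i = k then 1 else 0)" .
  with e that show ?thesis by blast
qed



lemma delta_sum_r: "(k::nat) < 4 \<Longrightarrow> (\<Sum>j\<in>idx. f j * (if j = k then 1 else 0)) = (f k :: real)"
  by (simp add: if_distrib cong: if_cong)
lemma delta_sum_l: "(k::nat) < 4 \<Longrightarrow> (\<Sum>j\<in>idx. (if k = j then 1 else 0) * f j) = (f k :: real)"
  using delta_sum_r[of k f] by (simp add: mult.commute eq_commute)

lemma swap_assoc:
  "(\<Sum>j\<in>idx. (\<Sum>l\<in>idx. A j l) * (B j :: real)) = (\<Sum>l\<in>idx. \<Sum>j\<in>idx. A j l * B j)"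
  unfolding sum_distrib_right by (rule sum.swap)

lemma ginv_props:
  assumes "lorentzian g"
  shows "\<forall>i<4. \<forall>k<4. g i k = g k i"
    and "\<forall>i<4. \<forall>k<4. (\<Sum>j\<in>idx. ginv g i j * g j k) = (if i = k then 1 else 0)"
    and "\<forall>i<4. \<forall>k<4. (\<Sum>j\<in>idx. g i j * ginv g j k) = (if i = k then 1 else 0)"
    and "\<forall>i<4. \<forall>k<4. ginv g i k = ginv g k i"
proof -
  show gs: "\<forall>i<4. \<forall>k<4. g i k = g k i" using assms unfolding lorentzian_def by blast
  obtain e where e1: "\<forall>a<4. \<forall>b<4. (\<Sum>\<mu>\<in>idx. \<Sum>\<nu>\<in>idx. g \<mu> \<nu> * e a \<mu> * e b \<nu>) = minkowski a b"
    and e2: "\<forall>i<4. \<forall>k<4. (\<Sum>j\<in>idx. e j i * (minkowski j j * (\<Sum>l\<in>idx. e j l * g l k))) = (if i = k then 1 else 0)"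
    using lor_frame[OF assms] by blast
  define gi where "gi i k = (\<Sum>a\<in>idx. e a i * minkowski a a * e a k)" for i k
  have gis: "gi i k = gi k i" for i k unfolding gi_def by (simp add: mult_ac)
  have p1: "\<forall>i<4. \<forall>k<4. (\<Sum>j\<in>idx. gi i j * g j k) = (if i = k then 1 else 0)"
  proof (intro allI impI)
    fix i k :: nat assume ik: "i<4" "k<4"
    have "(\<Sum>j\<in>idx. gi i j * g j k) = (\<Sum>j\<in>idx. e j i * (minkowski j j * (\<Sum>l\<in>idx. e j l * g l k)))"
      unfolding gi_def swap_assoc by (simp add: sum_distrib_left mult_ac)
    thus "(\<Sum>j\<in>idx. gi i j * g j k) = (if i = k then 1 else 0)" using e2 ik by simp
  qed
  have p2: "\<forall>i<4. \<forall>k<4. (\<Sum>j\<in>idx. g i j * gi j k) = (if i = k then 1 else 0)"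
  proof (intro allI impI)
    fix i k :: nat assume ik: "i<4" "k<4"
    have "(\<Sum>j\<in>idx. g i j * gi j k) = (\<Sum>j\<in>idx. gi k j * g j i)"
      by (rule sum.cong) (use gs gis ik in \<open>auto simp: mult_ac\<close>)
    thus "(\<Sum>j\<in>idx. g i j * gi j k) = (if i = k then 1 else 0)" using p1 ik by auto
  qed
  have ex: "\<exists>h. \<forall>i<4. \<forall>k<4. (\<Sum>j\<in>idx. h i j * g j k) = (if i = k then 1 else 0)"
    using p1 by blast
  show q1: "\<forall>i<4. \<forall>k<4. (\<Sum>j\<in>idx. ginv g i j * g j k) = (if i = k then 1 else 0)"
    unfolding ginv_def by (rule someI_ex[OF ex])
  have eq: "\<forall>i<4. \<forall>k<4. ginv g i k = gi i k"
  proof (intro allI impI)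
    fix i k :: nat assume ik: "i<4" "k<4"
    have "ginv g i k = (\<Sum>j\<in>idx. ginv g i j * (if j = k then 1 else 0))" using ik by (simp add: delta_sum_r)
    also have "\<dots> = (\<Sum>j\<in>idx. ginv g i j * (\<Sum>l\<in>idx. g j l * gi l k))"
      by (rule sum.cong) (use p2 ik in auto)
    also have "\<dots> = (\<Sum>l\<in>idx. (\<Sum>j\<in>idx. ginv g i j * g j l) * gi l k)"
      unfolding sum_distrib_left sum_distrib_right mult.assoc by (rule sum.swap)
    also have "\<dots> = (\<Sum>l\<in>idx. (if i = l then 1 else 0) * gi l k)"
      by (rule sum.cong) (use q1 ik in auto)
    also have "\<dots> = gi i k" using ik by (simp add: delta_sum_l)
    finally show "ginv g i k = gi i k" .
  qed
  show "\<forall>i<4. \<forall>k<4. (\<Sum>j\<in>idx. g i j * ginv g j k) = (if i = k then 1 else 0)"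
  proof (intro allI impI)
    fix i k :: nat assume ik: "i<4" "k<4"
    have "(\<Sum>j\<in>idx. g i j * ginv g j k) = (\<Sum>j\<in>idx. g i j * gi j k)"
      by (rule sum.cong) (use eq ik in auto)
    thus "(\<Sum>j\<in>idx. g i j * ginv g j k) = (if i = k then 1 else 0)" using p2 ik by simp
  qed
  show "\<forall>i<4. \<forall>k<4. ginv g i k = ginv g k i" using eq gis by simp
qed



lemma alg_pos:
  fixes x0 x1 x2 x3 v0 v1 v2 v3 :: real
  assumes h1: "-x0*x0 + x1*x1 + x2*x2 + x3*x3 = -1"
    and h2: "-x0*v0 + x1*v1 + x2*v2 + x3*v3 = 0"
  shows "0 \<le> -v0*v0 + v1*v1 + v2*v2 + v3*v3"
    and "-v0*v0 + v1*v1 + v2*v2 + v3*v3 = 0 \<Longrightarrow> v0 = 0 \<and> v1 = 0 \<and> v2 = 0 \<and> v3 = 0"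
proof -
  define N where "N = -v0*v0 + v1*v1 + v2*v2 + v3*v3"
  have a: "x0*x0 = 1 + x1*x1 + x2*x2 + x3*x3" using h1 by linarith
  have b: "x0*v0 = x1*v1 + x2*v2 + x3*v3" using h2 by linarith
  have "x0*x0 * N = x0*x0*(v1*v1+v2*v2+v3*v3) - (x0*v0)*(x0*v0)" unfolding N_def by (simp add: algebra_simps)
  also have "\<dots> = (1 + x1*x1 + x2*x2 + x3*x3)*(v1*v1+v2*v2+v3*v3) - (x1*v1 + x2*v2 + x3*v3)*(x1*v1 + x2*v2 + x3*v3)"
    unfolding a b ..
  also have "\<dots> = (v1*v1+v2*v2+v3*v3) + (x1*v2-x2*v1)*(x1*v2-x2*v1) + (x1*v3-x3*v1)*(x1*v3-x3*v1) + (x2*v3-x3*v2)*(x2*v3-x3*v2)"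
    by (simp add: algebra_simps)
  finally have key: "x0*x0 * N = (v1*v1+v2*v2+v3*v3) + (x1*v2-x2*v1)*(x1*v2-x2*v1) + (x1*v3-x3*v1)*(x1*v3-x3*v1) + (x2*v3-x3*v2)*(x2*v3-x3*v2)" .
  have s1: "x1*x1 \<ge> 0" "x2*x2 \<ge> 0" "x3*x3 \<ge> 0" "v1*v1 \<ge> 0" "v2*v2 \<ge> 0" "v3*v3 \<ge> 0"
    by (simp_all add: zero_le_square)
  have x0p: "x0*x0 \<ge> 1" using a s1 by linarith
  have r: "x0*x0*N \<ge> v1*v1+v2*v2+v3*v3"
    unfolding key using zero_le_square[of "x1*v2-x2*v1"] zero_le_square[of "x1*v3-x3*v1"] zero_le_square[of "x2*v3-x3*v2"]
    by linarith
  have "x0*x0*N \<ge> 0" using r s1 by linarith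
  hence "N \<ge> 0" using x0p by (simp add: zero_le_mult_iff)
  thus "0 \<le> -v0*v0 + v1*v1 + v2*v2 + v3*v3" unfolding N_def .
  assume "-v0*v0 + v1*v1 + v2*v2 + v3*v3 = 0"
  hence "N = 0" unfolding N_def .
  hence "v1*v1+v2*v2+v3*v3 \<le> 0" using r by simp
  hence "v1*v1 = 0" "v2*v2 = 0" "v3*v3 = 0" using s1 by linarith+
  hence v123: "v1 = 0" "v2 = 0" "v3 = 0" by simp_all
  with b have "x0 * v0 = 0" by simp
  moreover have "x0 \<noteq> 0" using x0p by auto
  ultimately show "v0 = 0 \<and> v1 = 0 \<and> v2 = 0 \<and> v3 = 0" using v123 by simp
qed



lemma swap4:
  "(\<Sum>\<mu>\<in>S. \<Sum>\<nu>\<in>T. \<Sum>a\<in>A. \<Sum>b\<in>B. F \<mu> \<nu> a b) = (\<Sum>a\<in>A. \<Sum>b\<in>B. \<Sum>\<mu>\<in>S. \<Sum>\<nu>\<in>T. (F \<mu> \<nu> a b :: real))"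
proof -
  have "(\<Sum>\<mu>\<in>S. \<Sum>\<nu>\<in>T. \<Sum>a\<in>A. \<Sum>b\<in>B. F \<mu> \<nu> a b) = (\<Sum>\<mu>\<in>S. \<Sum>a\<in>A. \<Sum>\<nu>\<in>T. \<Sum>b\<in>B. F \<mu> \<nu> a b)"
    by (rule sum.cong[OF refl], rule sum.swap)
  also have "\<dots> = (\<Sum>a\<in>A. \<Sum>\<mu>\<in>S. \<Sum>\<nu>\<in>T. \<Sum>b\<in>B. F \<mu> \<nu> a b)" by (rule sum.swap)
  also have "\<dots> = (\<Sum>a\<in>A. \<Sum>\<mu>\<in>S. \<Sum>b\<in>B. \<Sum>\<nu>\<in>T. F \<mu> \<nu> a b)"
    by (rule sum.cong[OF refl], rule sum.cong[OF refl], rule sum.swap)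
  also have "\<dots> = (\<Sum>a\<in>A. \<Sum>b\<in>B. \<Sum>\<mu>\<in>S. \<Sum>\<nu>\<in>T. F \<mu> \<nu> a b)"
    by (rule sum.cong[OF refl], rule sum.swap)
  finally show ?thesis .
qed


lemma frame_coords:
  assumes "lorentzian g"
  shows "\<exists>(co :: (nat \<Rightarrow> real) \<Rightarrow> nat \<Rightarrow> real) e. (\<forall>u. \<forall>i<4. u i = (\<Sum>j\<in>idx. e j i * co u j)) \<and>
    (\<forall>u w. ip g u w = - co u 0 * co w 0 + co u 1 * co w 1 + co u 2 * co w 2 + co u 3 * co w 3)"
proof -
  obtain e where e1: "\<forall>a<4. \<forall>b<4. (\<Sum>\<mu>\<in>idx. \<Sum>\<nu>\<in>idx. g \<mu> \<nu> * e a \<mu> * e b \<nu>) = minkowski a b"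
    and e2: "\<forall>i<4. \<forall>k<4. (\<Sum>j\<in>idx. e j i * (minkowski j j * (\<Sum>l\<in>idx. e j l * g l k))) = (if i = k then 1 else 0)"
    using lor_frame[OF assms] by blast
  define L where "L j k = minkowski j j * (\<Sum>l\<in>idx. e j l * g l k)" for j k
  define co where "co u j = (\<Sum>k\<in>idx. L j k * u k)" for u :: "nat \<Rightarrow> real" and j
  have rep: "u i = (\<Sum>j\<in>idx. e j i * co u j)" if "i < 4" for u i
  proof -
    have "(\<Sum>j\<in>idx. e j i * co u j) = (\<Sum>j\<in>idx. \<Sum>k\<in>idx. e j i * L j k * u k)"
      unfolding co_def by (simp add: sum_distrib_left mult.assoc)
    also have "\<dots> = (\<Sum>k\<in>idx. (\<Sum>j\<in>idx. e j i * L j k) * u k)"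
      unfolding sum_distrib_right by (rule sum.swap)
    also have "\<dots> = (\<Sum>k\<in>idx. (if i = k then 1 else 0) * u k)"
      by (rule sum.cong[OF refl]) (use e2 that in \<open>auto simp: L_def\<close>)
    also have "\<dots> = u i" using that by (rule delta_sum_l)
    finally show ?thesis by simp
  qed
  have ipc: "ip g u w = - co u 0 * co w 0 + co u 1 * co w 1 + co u 2 * co w 2 + co u 3 * co w 3" for u w
  proof -
    have "ip g u w = (\<Sum>\<mu>\<in>idx. \<Sum>\<nu>\<in>idx. g \<mu> \<nu> * (\<Sum>a\<in>idx. e a \<mu> * co u a) * (\<Sum>b\<in>idx. e b \<nu> * co w b))"
      unfolding ip_def by (intro sum.cong refl) (simp add: rep[symmetric])
    also have "\<dots> = (\<Sum>\<mu>\<in>idx. \<Sum>\<nu>\<in>idx. \<Sum>a\<in>idx. \<Sum>b\<in>idx. co u a * co w b * (g \<mu> \<nu> * e a \<mu> * e b \<nu>))"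
      by (intro sum.cong refl) (simp only: sum_product sum_distrib_left mult_ac)
    also have "\<dots> = (\<Sum>a\<in>idx. \<Sum>b\<in>idx. \<Sum>\<mu>\<in>idx. \<Sum>\<nu>\<in>idx. co u a * co w b * (g \<mu> \<nu> * e a \<mu> * e b \<nu>))"
      by (rule swap4)
    also have "\<dots> = (\<Sum>a\<in>idx. \<Sum>b\<in>idx. co u a * co w b * minkowski a b)"
      by (intro sum.cong refl) (simp only: sum_distrib_left[symmetric] e1 lessThan_iff)
    also have "\<dots> = - co u 0 * co w 0 + co u 1 * co w 1 + co u 2 * co w 2 + co u 3 * co w 3"
      by (simp add: sum4 minkowski_def)
    finally show ?thesis .
  qed
  show ?thesis using rep ipc by blast
qed

lemma spacelike_perp:
  assumes "lorentzian g" "ip g x x = -1" "ip g x v = 0"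
  shows "0 \<le> ip g v v" and "ip g v v = 0 \<Longrightarrow> \<forall>i<4. v i = 0"
proof -
  obtain co e where rep: "\<forall>u. \<forall>i<4. u i = (\<Sum>j\<in>idx. e j i * co u j)"
    and ipc: "\<forall>u w. ip g u w = - co u 0 * co w 0 + co u 1 * co w 1 + co u 2 * co w 2 + co u 3 * co w 3"
    using frame_coords[OF assms(1)] by blast
  note h = alg_pos[of "co x 0" "co x 1" "co x 2" "co x 3" "co v 0" "co v 1" "co v 2" "co v 3"]
  have h1: "- co x 0 * co x 0 + co x 1 * co x 1 + co x 2 * co x 2 + co x 3 * co x 3 = -1"
    using assms(2) ipc by simp
  have h2: "- co x 0 * co v 0 + co x 1 * co v 1 + co x 2 * co v 2 + co x 3 * co v 3 = 0"
    using assms(3) ipc by simp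
  show "0 \<le> ip g v v" using h(1)[OF h1 h2] ipc by simp
  assume "ip g v v = 0"
  hence "co v 0 = 0 \<and> co v 1 = 0 \<and> co v 2 = 0 \<and> co v 3 = 0" using h(2)[OF h1 h2] ipc by simp
  hence z: "\<forall>j\<in>idx. co v j = 0" by (auto simp: less_Suc_eq numeral_eq_Suc)
  show "\<forall>i<4. v i = 0"
  proof (intro allI impI)
    fix i :: nat assume "i < 4"
    hence "v i = (\<Sum>j\<in>idx. e j i * co v j)" using rep by blast
    also have "\<dots> = 0" using z by simp
    finally show "v i = 0" .
  qed
qed



lemma pairs4: "{(i,j). i < j \<and> j < (4::nat)} = {(0,1),(0,2),(0,3),(1,2),(1,3),(2,3)}"
  by (auto simp: less_Suc_eq numeral_eq_Suc)

lemma levi_closed: "levi a b c d = real_of_int (sgn (int b - int a) * sgn (int c - int a) * sgn (int d - int a)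
   * sgn (int c - int b) * sgn (int d - int b) * sgn (int d - int c))"
  unfolding levi_def Let_def pairs4 by (simp add: mult_ac)

lemma sgn_swap: "sgn (p - q) = - sgn (q - (p::int))"
  by (simp add: sgn_if)

lemma levi_12: "levi a b c d = - levi b a c d"
  unfolding levi_closed
  by (simp only: sgn_swap[of "int a" "int b"] sgn_swap[of "int a" "int c"] sgn_swap[of "int a" "int d"]
     sgn_swap[of "int b" "int c"] sgn_swap[of "int b" "int d"] sgn_swap[of "int c" "int d"]) (simp add: mult_ac)

lemma levi_13: "levi a b c d = - levi c b a d"
  unfolding levi_closed
  by (simp only: sgn_swap[of "int a" "int b"] sgn_swap[of "int a" "int c"] sgn_swap[of "int a" "int d"]
     sgn_swap[of "int b" "int c"] sgn_swap[of "int b" "int d"] sgn_swap[of "int c" "int d"]) (simp add: mult_ac)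

lemma levi_14: "levi a b c d = - levi d b c a"
  unfolding levi_closed
  by (simp only: sgn_swap[of "int a" "int b"] sgn_swap[of "int a" "int c"] sgn_swap[of "int a" "int d"]
     sgn_swap[of "int b" "int c"] sgn_swap[of "int b" "int d"] sgn_swap[of "int c" "int d"]) (simp add: mult_ac)

lemma levi_23: "levi a b c d = - levi a c b d"
  unfolding levi_closed
  by (simp only: sgn_swap[of "int a" "int b"] sgn_swap[of "int a" "int c"] sgn_swap[of "int a" "int d"]
     sgn_swap[of "int b" "int c"] sgn_swap[of "int b" "int d"] sgn_swap[of "int c" "int d"]) (simp add: mult_ac)

lemma levi_24: "levi a b c d = - levi a d c b"
  unfolding levi_closed
  by (simp only: sgn_swap[of "int a" "int b"] sgn_swap[of "int a" "int c"] sgn_swap[of "int a" "int d"]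
     sgn_swap[of "int b" "int c"] sgn_swap[of "int b" "int d"] sgn_swap[of "int c" "int d"]) (simp add: mult_ac)

lemma levi_34: "levi a b c d = - levi a b d c"
  unfolding levi_closed
  by (simp only: sgn_swap[of "int a" "int b"] sgn_swap[of "int a" "int c"] sgn_swap[of "int a" "int d"]
     sgn_swap[of "int b" "int c"] sgn_swap[of "int b" "int d"] sgn_swap[of "int c" "int d"]) (simp add: mult_ac)



locale met =
  fixes g gi :: tens2
  assumes gsym: "i<4 \<Longrightarrow> k<4 \<Longrightarrow> g i k = g k i"
    and gisym: "i<4 \<Longrightarrow> k<4 \<Longrightarrow> gi i k = gi k i"
    and gig: "i<4 \<Longrightarrow> k<4 \<Longrightarrow> (\<Sum>j\<in>idx. gi i j * g j k) = (if i=k then 1 else 0)"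
    and ggi: "i<4 \<Longrightarrow> k<4 \<Longrightarrow> (\<Sum>j\<in>idx. g i j * gi j k) = (if i=k then 1 else 0)"
    and gi_eq: "ginv g = gi"
    and pos: "ip g x x = -1 \<Longrightarrow> ip g x v = 0 \<Longrightarrow> 0 \<le> ip g v v \<and> (ip g v v = 0 \<longrightarrow> (\<forall>i<4. v i = 0))"
begin

lemma raise_lower: "k<4 \<Longrightarrow> (\<Sum>m\<in>idx. gi k m * lower g v m) = v k"
proof -
  assume k: "k<4"
  have "(\<Sum>m\<in>idx. gi k m * lower g v m) = (\<Sum>m\<in>idx. \<Sum>j\<in>idx. gi k m * g m j * v j)"
    unfolding lower_def by (simp add: sum_distrib_left mult.assoc)
  also have "\<dots> = (\<Sum>j\<in>idx. (\<Sum>m\<in>idx. gi k m * g m j) * v j)"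
    unfolding sum_distrib_right by (rule sum.swap)
  also have "\<dots> = (\<Sum>j\<in>idx. (if k = j then 1 else 0) * v j)"
    by (rule sum.cong[OF refl]) (simp add: gig k)
  also have "\<dots> = v k" using k by (rule delta_sum_l)
  finally show ?thesis .
qed

lemma raise_lower': "k<4 \<Longrightarrow> (\<Sum>m\<in>idx. lower g v m * gi m k) = v k"
  using raise_lower[of k v] by (simp add: gisym mult.commute)

lemma lower_raise: "a<4 \<Longrightarrow> (\<Sum>m\<in>idx. g a m * (\<Sum>j\<in>idx. gi m j * s j)) = s a"
proof -
  assume a: "a<4"
  have "(\<Sum>m\<in>idx. g a m * (\<Sum>j\<in>idx. gi m j * s j)) = (\<Sum>m\<in>idx. \<Sum>j\<in>idx. g a m * gi m j * s j)"
    by (simp add: sum_distrib_left mult.assoc)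
  also have "\<dots> = (\<Sum>j\<in>idx. (\<Sum>m\<in>idx. g a m * gi m j) * s j)"
    unfolding sum_distrib_right by (rule sum.swap)
  also have "\<dots> = (\<Sum>j\<in>idx. (if a = j then 1 else 0) * s j)"
    by (rule sum.cong[OF refl]) (simp add: ggi a)
  also have "\<dots> = s a" using a by (rule delta_sum_l)
  finally show ?thesis .
qed

lemma ip_lower: "ip g u v = (\<Sum>a\<in>idx. u a * lower g v a)"
  unfolding ip_def lower_def by (simp add: sum_distrib_left mult_ac)

lemma ip_sym: "ip g u v = ip g v u"
  unfolding ip_def
  apply (subst sum.swap)
  by (intro sum.cong refl) (simp add: gsym mult_ac)

lemma ip_lower': "ip g u v = (\<Sum>a\<in>idx. lower g u a * v a)"
  using ip_lower[of v u] ip_sym by (simp add: mult.commute)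

lemma ip_cong2: "(\<And>i. i<4 \<Longrightarrow> v i = w i) \<Longrightarrow> ip g u v = ip g u w"
  unfolding ip_def by (intro sum.cong refl) auto

lemma ip_cong1: "(\<And>i. i<4 \<Longrightarrow> v i = w i) \<Longrightarrow> ip g v u = ip g w u"
  unfolding ip_def by (intro sum.cong refl) auto

lemma ip_lin2: "ip g u (\<lambda>i. s * v i + t * w i) = s * ip g u v + t * ip g u w"
  unfolding ip_def by (simp add: sum.distrib sum_distrib_left algebra_simps)

lemma ip_lin1: "ip g (\<lambda>i. s * v i + t * w i) u = s * ip g v u + t * ip g w u"
  unfolding ip_def by (simp add: sum.distrib sum_distrib_left algebra_simps)

lemma ip_diff2: "ip g u (\<lambda>i. v i - w i) = ip g u v - ip g u w"
  unfolding ip_def by (simp add: sum_subtractf algebra_simps)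

lemma lower_lin: "lower g (\<lambda>i. s * v i + t * w i) a = s * lower g v a + t * lower g w a"
  unfolding lower_def by (simp add: sum.distrib sum_distrib_left algebra_simps)

lemma lower_cong: "(\<And>i. i<4 \<Longrightarrow> v i = w i) \<Longrightarrow> lower g v a = lower g w a"
  unfolding lower_def by (intro sum.cong refl) auto

end


definition sig :: "tens2 \<Rightarrow> (nat \<Rightarrow> real) \<Rightarrow> (nat \<Rightarrow> real) \<Rightarrow> tens2" where
  "sig g x y a b = (\<Sum>k\<in>idx. \<Sum>l\<in>idx. vol g a b k l * x k * y l)"

lemma antisym_sum0:
  assumes "\<And>a k. f a k = - f k a"
  shows "(\<Sum>a\<in>A. \<Sum>k\<in>A. f a k * x a * x k) = (0::real)"
proof -
  have "(\<Sum>a\<in>A. \<Sum>k\<in>A. f a k * x a * x k) = (\<Sum>k\<in>A. \<Sum>a\<in>A. f a k * x a * x k)" by (rule sum.swap)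
  also have "\<dots> = (\<Sum>k\<in>A. \<Sum>a\<in>A. - (f k a * x k * x a))"
  proof (rule sum.cong[OF refl], rule sum.cong[OF refl])
    fix i j show "f j i * x j * x i = - (f i j * x i * x j)" using assms[of j i] by simp
  qed
  also have "\<dots> = - (\<Sum>a\<in>A. \<Sum>k\<in>A. f a k * x a * x k)" by (simp add: sum_negf)
  finally show ?thesis by simp
qed

lemma antisym_sum0':
  assumes "\<And>a k. f a k = - f k a"
  shows "(\<Sum>a\<in>A. \<Sum>k\<in>A. x a * f a k * x k) = (0::real)"
  using antisym_sum0[where f=f and A=A and x=x, OF assms] by (simp add: mult_ac)

lemma vol_12: "vol g a b c d = - vol g b a c d" unfolding vol_def by (subst levi_12) simp
lemma vol_13: "vol g a b c d = - vol g c b a d" unfolding vol_def by (subst levi_13) simp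
lemma vol_14: "vol g a b c d = - vol g d b c a" unfolding vol_def by (subst levi_14) simp
lemma vol_23: "vol g a b c d = - vol g a c b d" unfolding vol_def by (subst levi_23) simp
lemma vol_24: "vol g a b c d = - vol g a d c b" unfolding vol_def by (subst levi_24) simp
lemma vol_34: "vol g a b c d = - vol g a b d c" unfolding vol_def by (subst levi_34) simp

lemma sig_swap: "sig g y x a b = - sig g x y a b"
proof -
  have "sig g y x a b = (\<Sum>l\<in>idx. \<Sum>k\<in>idx. vol g a b k l * y k * x l)" unfolding sig_def by (rule sum.swap)
  also have "\<dots> = (\<Sum>l\<in>idx. \<Sum>k\<in>idx. - (vol g a b l k * x l * y k))"
  proof (intro sum.cong refl)
    fix l k show "vol g a b k l * y k * x l = - (vol g a b l k * x l * y k)"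
      using vol_34[of g a b k l] by simp
  qed
  finally show ?thesis unfolding sig_def by (simp add: sum_negf)
qed

lemma sig_anti: "sig g x y b a = - sig g x y a b"
proof -
  have "\<And>k l. vol g b a k l = - vol g a b k l" by (rule vol_12)
  thus ?thesis unfolding sig_def by (simp add: sum_negf)
qed

lemma sig_xl: "(\<Sum>a\<in>idx. x a * sig g x y a b) = 0"
proof -
  have "(\<Sum>a\<in>idx. x a * sig g x y a b) = (\<Sum>a\<in>idx. \<Sum>k\<in>idx. (\<Sum>l\<in>idx. vol g a b k l * y l) * x a * x k)"
    unfolding sig_def by (simp add: sum_distrib_left sum_distrib_right mult_ac)
  also have "\<dots> = 0"
  proof (rule antisym_sum0)
    fix a k
    have "\<And>l. vol g a b k l = - vol g k b a l" by (rule vol_13)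
    thus "(\<Sum>l\<in>idx. vol g a b k l * y l) = - (\<Sum>l\<in>idx. vol g k b a l * y l)"
      by (simp add: sum_negf)
  qed
  finally show ?thesis .
qed

lemma sig_yl: "(\<Sum>a\<in>idx. y a * sig g x y a b) = 0"
proof -
  have "(\<Sum>a\<in>idx. y a * sig g x y a b) = (\<Sum>a\<in>idx. \<Sum>l\<in>idx. (\<Sum>k\<in>idx. vol g a b k l * x k) * y a * y l)"
    unfolding sig_def
    apply (simp add: sum_distrib_left sum_distrib_right)
    apply (rule sum.cong[OF refl])
    apply (subst sum.swap)
    apply (simp add: mult_ac)
    done
  also have "\<dots> = 0"
  proof (rule antisym_sum0)
    fix a l
    have "\<And>k. vol g a b k l = - vol g l b k a" by (rule vol_14)
    thus "(\<Sum>k\<in>idx. vol g a b k l * x k) = - (\<Sum>k\<in>idx. vol g l b k a * x k)"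
      by (simp add: sum_negf)
  qed
  finally show ?thesis .
qed

lemma sig_xr: "(\<Sum>b\<in>idx. sig g x y a b * x b) = 0"
  using sig_xl[of x g y a] by (simp add: sig_anti[of g x y a] sum_negf mult.commute)
lemma sig_yr: "(\<Sum>b\<in>idx. sig g x y a b * y b) = 0"
  using sig_yl[of y g x a] by (simp add: sig_anti[of g x y a] sum_negf mult.commute)



locale frm = met +
  fixes x y :: "nat \<Rightarrow> real" and U :: tens2
  assumes xx: "ip g x x = -1" and yy: "ip g y y = 1" and xy: "ip g x y = 0"
    and Uw: "a<4 \<Longrightarrow> b<4 \<Longrightarrow> U a b = lower g x a * lower g y b - lower g y a * lower g x b"
begin

lemma yx: "ip g y x = 0" using xy ip_sym by simp

lemma raise2: "k<4 \<Longrightarrow> l<4 \<Longrightarrow> (\<Sum>m\<in>idx. \<Sum>n\<in>idx. gi k m * gi l n * U m n) = x k * y l - y k * x l"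
proof -
  assume kl: "k<4" "l<4"
  have "(\<Sum>m\<in>idx. \<Sum>n\<in>idx. gi k m * gi l n * U m n)
     = (\<Sum>m\<in>idx. \<Sum>n\<in>idx. gi k m * lower g x m * (gi l n * lower g y n) - gi k m * lower g y m * (gi l n * lower g x n))"
    by (intro sum.cong refl) (simp add: Uw algebra_simps)
  also have "\<dots> = (\<Sum>m\<in>idx. gi k m * lower g x m) * (\<Sum>n\<in>idx. gi l n * lower g y n)
      - (\<Sum>m\<in>idx. gi k m * lower g y m) * (\<Sum>n\<in>idx. gi l n * lower g x n)"
    by (simp add: sum_product sum_subtractf)
  also have "\<dots> = x k * y l - y k * x l" using kl by (simp add: raise_lower)
  finally show ?thesis .
qed

lemma raise2': "k<4 \<Longrightarrow> l<4 \<Longrightarrow> (\<Sum>m\<in>idx. \<Sum>n\<in>idx. gi k m * (gi l n * U m n)) = x k * y l - y k * x l"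
  using raise2 by (simp add: mult.assoc)

lemma hodge_U: "hodge2 g U a b = sig g x y a b"
proof -
  have "hodge2 g U a b = 1/2 * (\<Sum>k\<in>idx. \<Sum>l\<in>idx. vol g a b k l * (\<Sum>m\<in>idx. \<Sum>n\<in>idx. gi k m * gi l n * U m n))"
    unfolding hodge2_def gi_eq by (simp add: sum_distrib_left mult.assoc)
  also have "\<dots> = 1/2 * (\<Sum>k\<in>idx. \<Sum>l\<in>idx. vol g a b k l * x k * y l - vol g a b k l * y k * x l)"
    by (intro arg_cong[where f="\<lambda>t. 1/2 * t"] sum.cong refl) (simp add: mult.assoc raise2' right_diff_distrib)
  also have "\<dots> = 1/2 * (sig g x y a b - sig g y x a b)"
    unfolding sig_def by (simp add: sum_subtractf)
  also have "\<dots> = sig g x y a b" using sig_swap[of g y x a b] by simp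
  finally show ?thesis .
qed

lemma hodge_U_fun: "hodge2 g U = sig g x y"
  using hodge_U by (intro ext) simp

lemma rU: "m<4 \<Longrightarrow> b<4 \<Longrightarrow> (\<Sum>n\<in>idx. gi m n * U n b) = x m * lower g y b - y m * lower g x b"
proof -
  assume mb: "m<4" "b<4"
  have "(\<Sum>n\<in>idx. gi m n * U n b) = (\<Sum>n\<in>idx. (gi m n * lower g x n) * lower g y b - (gi m n * lower g y n) * lower g x b)"
    by (intro sum.cong refl) (simp add: Uw mb algebra_simps)
  also have "\<dots> = (\<Sum>n\<in>idx. gi m n * lower g x n) * lower g y b - (\<Sum>n\<in>idx. gi m n * lower g y n) * lower g x b"
    by (simp add: sum_subtractf sum_distrib_right)
  finally have "(\<Sum>n\<in>idx. gi m n * U n b) = (\<Sum>n\<in>idx. gi m n * lower g x n) * lower g y b - (\<Sum>n\<in>idx. gi m n * lower g y n) * lower g x b" .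
  thus ?thesis using mb by (simp add: raise_lower)
qed

lemma sq2_U: "a<4 \<Longrightarrow> b<4 \<Longrightarrow> sq2 g U a b = - lower g x a * lower g x b + lower g y a * lower g y b"
proof -
  assume ab: "a<4" "b<4"
  have "sq2 g U a b = (\<Sum>m\<in>idx. U a m * (\<Sum>n\<in>idx. gi m n * U n b))"
    unfolding sq2_def gi_eq by (simp add: sum_distrib_left mult.assoc)
  also have "\<dots> = (\<Sum>m\<in>idx. (lower g x a * lower g y m - lower g y a * lower g x m) * (x m * lower g y b - y m * lower g x b))"
    by (intro sum.cong refl) (simp add: Uw[OF ab(1)] rU ab)
  also have "\<dots> = lower g x a * lower g y b * (\<Sum>m\<in>idx. lower g y m * x m) - lower g x a * lower g x b * (\<Sum>m\<in>idx. lower g y m * y m)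
     - lower g y a * lower g y b * (\<Sum>m\<in>idx. lower g x m * x m) + lower g y a * lower g x b * (\<Sum>m\<in>idx. lower g x m * y m)"
    by (simp add: sum_distrib_left sum_subtractf[symmetric] sum.distrib[symmetric] algebra_simps)
  also have "\<dots> = - lower g x a * lower g x b + lower g y a * lower g y b"
    by (simp add: ip_lower'[symmetric] xx yy xy yx)
  finally show ?thesis .
qed

end


lemma swap3: "(\<Sum>k\<in>A. \<Sum>m\<in>B. \<Sum>n\<in>C. F k m n) = (\<Sum>m\<in>B. \<Sum>n\<in>C. \<Sum>k\<in>A. (F k m n :: real))"
proof -
  have "(\<Sum>k\<in>A. \<Sum>m\<in>B. \<Sum>n\<in>C. F k m n) = (\<Sum>m\<in>B. \<Sum>k\<in>A. \<Sum>n\<in>C. F k m n)" by (rule sum.swap)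
  also have "\<dots> = (\<Sum>m\<in>B. \<Sum>n\<in>C. \<Sum>k\<in>A. F k m n)" by (rule sum.cong[OF refl], rule sum.swap)
  finally show ?thesis .
qed

context met
begin

lemma sq2_left: "(\<Sum>k\<in>idx. p k * sq2 g A k l) = (\<Sum>m\<in>idx. \<Sum>n\<in>idx. (\<Sum>k\<in>idx. p k * A k m) * gi m n * A n l)"
proof -
  have "(\<Sum>k\<in>idx. p k * sq2 g A k l) = (\<Sum>k\<in>idx. \<Sum>m\<in>idx. \<Sum>n\<in>idx. p k * A k m * gi m n * A n l)"
    unfolding sq2_def gi_eq by (simp add: sum_distrib_left mult.assoc)
  also have "\<dots> = (\<Sum>m\<in>idx. \<Sum>n\<in>idx. \<Sum>k\<in>idx. p k * A k m * gi m n * A n l)" by (rule swap3)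
  also have "\<dots> = (\<Sum>m\<in>idx. \<Sum>n\<in>idx. (\<Sum>k\<in>idx. p k * A k m) * gi m n * A n l)"
    by (simp add: sum_distrib_right)
  finally show ?thesis .
qed

end

locale emR = frm +
  fixes R :: tens2 and \<kappa> :: real
  assumes Rdef: "k<4 \<Longrightarrow> l<4 \<Longrightarrow> R k l = - \<kappa> * (sq2 g U k l + sq2 g (sig g x y) k l)"
    and Rsym: "k<4 \<Longrightarrow> l<4 \<Longrightarrow> R k l = R l k"
begin

abbreviation "S \<equiv> sig g x y"

lemma pU: "l<4 \<Longrightarrow> (\<Sum>k\<in>idx. p k * sq2 g U k l) = - ip g p x * lower g x l + ip g p y * lower g y l"
proof -
  assume l: "l<4"
  have "(\<Sum>k\<in>idx. p k * sq2 g U k l) = (\<Sum>k\<in>idx. - (p k * lower g x k) * lower g x l + (p k * lower g y k) * lower g y l)"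
    by (intro sum.cong refl) (simp add: sq2_U l algebra_simps)
  also have "\<dots> = - ip g p x * lower g x l + ip g p y * lower g y l"
    by (simp add: sum_subtractf sum_distrib_right ip_lower)
  finally show ?thesis .
qed

lemma xS: "(\<Sum>k\<in>idx. x k * sq2 g S k l) = 0"
  unfolding sq2_left by (simp add: sig_xl)
lemma yS: "(\<Sum>k\<in>idx. y k * sq2 g S k l) = 0"
  unfolding sq2_left by (simp add: sig_yl)

lemma pR: "l<4 \<Longrightarrow> (\<Sum>k\<in>idx. p k * R k l) = - \<kappa> * ((\<Sum>k\<in>idx. p k * sq2 g U k l) + (\<Sum>k\<in>idx. p k * sq2 g S k l))"
proof -
  assume l: "l<4"
  have "(\<Sum>k\<in>idx. p k * R k l) = (\<Sum>k\<in>idx. - \<kappa> * (p k * sq2 g U k l + p k * sq2 g S k l))"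
    by (intro sum.cong refl) (simp add: Rdef l algebra_simps)
  also have "\<dots> = - \<kappa> * (\<Sum>k\<in>idx. p k * sq2 g U k l + p k * sq2 g S k l)"
    by (simp add: sum_distrib_left)
  finally show ?thesis by (simp add: sum.distrib)
qed

lemma xR: "l<4 \<Longrightarrow> (\<Sum>k\<in>idx. x k * R k l) = - \<kappa> * lower g x l"
  using xx xy by (simp add: pR pU xS)
lemma yR: "l<4 \<Longrightarrow> (\<Sum>k\<in>idx. y k * R k l) = - \<kappa> * lower g y l"
  using yy yx by (simp add: pR pU yS)

lemma Ugi: "n<4 \<Longrightarrow> k<4 \<Longrightarrow> (\<Sum>m\<in>idx. U n m * gi m k) = lower g x n * y k - lower g y n * x k"
proof -
  assume nk: "n<4" "k<4"
  have "(\<Sum>m\<in>idx. U n m * gi m k) = (\<Sum>m\<in>idx. lower g x n * (lower g y m * gi m k) - lower g y n * (lower g x m * gi m k))"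
    by (intro sum.cong refl) (simp add: Uw nk algebra_simps)
  also have "\<dots> = lower g x n * (\<Sum>m\<in>idx. lower g y m * gi m k) - lower g y n * (\<Sum>m\<in>idx. lower g x m * gi m k)"
    by (simp add: sum_subtractf sum_distrib_left)
  also have "\<dots> = lower g x n * y k - lower g y n * x k" using nk by (simp add: raise_lower')
  finally show ?thesis .
qed

lemma UgR: "n<4 \<Longrightarrow> l<4 \<Longrightarrow> (\<Sum>m\<in>idx. \<Sum>k\<in>idx. gi m k * R k l * U n m) = - \<kappa> * U n l"
proof -
  assume nl: "n<4" "l<4"
  have "(\<Sum>m\<in>idx. \<Sum>k\<in>idx. gi m k * R k l * U n m) = (\<Sum>k\<in>idx. (\<Sum>m\<in>idx. U n m * gi m k) * R k l)"
    by (subst sum.swap) (simp add: sum_distrib_right sum_distrib_left mult_ac)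
  also have "\<dots> = (\<Sum>k\<in>idx. lower g x n * (y k * R k l) - lower g y n * (x k * R k l))"
    by (intro sum.cong refl) (simp add: Ugi nl algebra_simps)
  also have "\<dots> = lower g x n * (\<Sum>k\<in>idx. y k * R k l) - lower g y n * (\<Sum>k\<in>idx. x k * R k l)"
    by (simp add: sum_subtractf sum_distrib_left)
  also have "\<dots> = - \<kappa> * U n l" using nl by (simp add: xR yR Uw algebra_simps)
  finally show ?thesis .
qed

end


lemma bil_anti:
  assumes "\<And>k m. A k m = - A m k"
  shows "(\<Sum>m\<in>I. (\<Sum>k\<in>I. a k * A k m) * b m) + (\<Sum>m\<in>I. (\<Sum>k\<in>I. b k * A k m) * a m) = (0::real)"
proof -
  have "(\<Sum>m\<in>I. (\<Sum>k\<in>I. b k * A k m) * a m) = (\<Sum>m\<in>I. \<Sum>k\<in>I. b k * A k m * a m)"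
    by (simp add: sum_distrib_right)
  also have "\<dots> = (\<Sum>k\<in>I. \<Sum>m\<in>I. b k * A k m * a m)" by (rule sum.swap)
  also have "\<dots> = (\<Sum>k\<in>I. \<Sum>m\<in>I. - (a m * A m k * b k))"
  proof (rule sum.cong[OF refl], rule sum.cong[OF refl])
    fix i j show "b i * A i j * a j = - (a j * A j i * b i)" using assms[of i j] by simp
  qed
  also have "\<dots> = - (\<Sum>m\<in>I. (\<Sum>k\<in>I. a k * A k m) * b m)"
    by (simp add: sum_negf sum_distrib_right)
  finally show ?thesis by simp
qed

context emR
begin

definition cS :: "nat \<Rightarrow> nat \<Rightarrow> real" where "cS n k = (\<Sum>m\<in>idx. S n m * gi m k)"

lemma cS_perp_x: "ip g (cS n) x = 0"
proof -
  have "ip g (cS n) x = (\<Sum>k\<in>idx. \<Sum>m\<in>idx. S n m * (gi m k * lower g x k))"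
    unfolding ip_lower cS_def by (simp add: sum_distrib_right mult.assoc)
  also have "\<dots> = (\<Sum>m\<in>idx. S n m * (\<Sum>k\<in>idx. gi m k * lower g x k))"
    by (subst sum.swap) (simp add: sum_distrib_left)
  also have "\<dots> = (\<Sum>m\<in>idx. S n m * x m)" by (intro sum.cong refl) (simp add: raise_lower)
  also have "\<dots> = 0" by (rule sig_xr)
  finally show ?thesis .
qed

lemma cS_perp_y: "ip g (cS n) y = 0"
proof -
  have "ip g (cS n) y = (\<Sum>k\<in>idx. \<Sum>m\<in>idx. S n m * (gi m k * lower g y k))"
    unfolding ip_lower cS_def by (simp add: sum_distrib_right mult.assoc)
  also have "\<dots> = (\<Sum>m\<in>idx. S n m * (\<Sum>k\<in>idx. gi m k * lower g y k))"
    by (subst sum.swap) (simp add: sum_distrib_left)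
  also have "\<dots> = (\<Sum>m\<in>idx. S n m * y m)" by (intro sum.cong refl) (simp add: raise_lower)
  also have "\<dots> = 0" by (rule sig_yr)
  finally show ?thesis .
qed

lemma giS: "m<4 \<Longrightarrow> (\<Sum>p\<in>idx. gi m p * S p l) = - cS l m"
proof -
  assume m: "m<4"
  have "(\<Sum>p\<in>idx. gi m p * S p l) = (\<Sum>p\<in>idx. - (S l p * gi p m))"
  proof (rule sum.cong[OF refl])
    fix p assume "p \<in> idx"
    thus "gi m p * S p l = - (S l p * gi p m)" using m gisym[of m p] sig_anti[of g x y l p] by simp
  qed
  thus ?thesis unfolding cS_def by (simp add: sum_negf)
qed

lemma cS_sq2S: "(\<Sum>k\<in>idx. cS n k * sq2 g S k l) = - (\<Sum>m\<in>idx. (\<Sum>k\<in>idx. cS n k * S k m) * cS l m)"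
proof -
  have "(\<Sum>k\<in>idx. cS n k * sq2 g S k l) = (\<Sum>m\<in>idx. (\<Sum>k\<in>idx. cS n k * S k m) * (\<Sum>p\<in>idx. gi m p * S p l))"
    unfolding sq2_left by (simp add: sum_distrib_left mult.assoc)
  also have "\<dots> = (\<Sum>m\<in>idx. - ((\<Sum>k\<in>idx. cS n k * S k m) * cS l m))"
    by (intro sum.cong refl) (simp add: giS)
  finally show ?thesis by (simp add: sum_negf)
qed

lemma SgR_one: "n<4 \<Longrightarrow> l<4 \<Longrightarrow> (\<Sum>m\<in>idx. \<Sum>k\<in>idx. gi m k * R k l * S n m) = \<kappa> * (\<Sum>m\<in>idx. (\<Sum>k\<in>idx. cS n k * S k m) * cS l m)"
proof -
  assume nl: "n<4" "l<4"
  have "(\<Sum>m\<in>idx. \<Sum>k\<in>idx. gi m k * R k l * S n m) = (\<Sum>k\<in>idx. cS n k * R k l)"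
    unfolding cS_def by (subst sum.swap) (simp add: sum_distrib_right sum_distrib_left mult_ac)
  also have "\<dots> = \<kappa> * (\<Sum>m\<in>idx. (\<Sum>k\<in>idx. cS n k * S k m) * cS l m)"
    using nl by (simp add: pR pU cS_perp_x cS_perp_y cS_sq2S)
  finally show ?thesis .
qed

lemma SgR: "n<4 \<Longrightarrow> l<4 \<Longrightarrow> (\<Sum>m\<in>idx. \<Sum>k\<in>idx. gi m k * R k l * S n m) + (\<Sum>m\<in>idx. \<Sum>k\<in>idx. gi m k * R k n * S l m) = 0"
proof -
  assume nl: "n<4" "l<4"
  have "(\<Sum>m\<in>idx. (\<Sum>k\<in>idx. cS n k * S k m) * cS l m) + (\<Sum>m\<in>idx. (\<Sum>k\<in>idx. cS l k * S k m) * cS n m) = 0"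
    by (rule bil_anti) (rule sig_anti)
  thus ?thesis using nl by (simp add: SgR_one distrib_left[symmetric])
qed

end


context emR
begin

definition sv :: "(nat \<Rightarrow> real) \<Rightarrow> nat \<Rightarrow> real" where "sv p j = (\<Sum>k\<in>idx. p k * S k j)"
definition cv :: "(nat \<Rightarrow> real) \<Rightarrow> nat \<Rightarrow> real" where "cv p m = (\<Sum>j\<in>idx. gi m j * sv p j)"
definition Rb :: "(nat \<Rightarrow> real) \<Rightarrow> (nat \<Rightarrow> real) \<Rightarrow> real" where "Rb p q = (\<Sum>k\<in>idx. \<Sum>l\<in>idx. p k * R k l * q l)"

lemma Sq: "(\<Sum>l\<in>idx. S n l * q l) = - sv q n"
  unfolding sv_def by (simp add: sum_negf[symmetric] sig_anti[of g x y n] mult.commute)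

lemma ip_cv: "ip g (cv p) (cv q) = (\<Sum>m\<in>idx. sv p m * cv q m)"
  unfolding ip_lower' by (intro sum.cong refl) (simp add: lower_def cv_def lower_raise)

lemma pSq: "(\<Sum>l\<in>idx. (\<Sum>k\<in>idx. p k * sq2 g S k l) * q l) = - ip g (cv p) (cv q)"
proof -
  have "(\<Sum>l\<in>idx. (\<Sum>k\<in>idx. p k * sq2 g S k l) * q l) = (\<Sum>l\<in>idx. \<Sum>m\<in>idx. \<Sum>n\<in>idx. sv p m * gi m n * (S n l * q l))"
    unfolding sq2_left sv_def by (simp add: sum_distrib_right sum_distrib_left mult.assoc)
  also have "\<dots> = (\<Sum>m\<in>idx. \<Sum>n\<in>idx. \<Sum>l\<in>idx. sv p m * gi m n * (S n l * q l))" by (rule swap3)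
  also have "\<dots> = (\<Sum>m\<in>idx. \<Sum>n\<in>idx. - (sv p m * (gi m n * sv q n)))"
    by (intro sum.cong refl) (simp add: sum_distrib_left[symmetric] Sq)
  also have "\<dots> = - (\<Sum>m\<in>idx. sv p m * cv q m)"
    unfolding cv_def by (simp add: sum_negf sum_distrib_left)
  finally show ?thesis by (simp add: ip_cv)
qed

lemma Rb_formula: "Rb p q = - \<kappa> * (- ip g p x * ip g x q + ip g p y * ip g y q - ip g (cv p) (cv q))"
proof -
  have "Rb p q = (\<Sum>l\<in>idx. (\<Sum>k\<in>idx. p k * R k l) * q l)"
    unfolding Rb_def by (subst sum.swap) (simp add: sum_distrib_right)
  also have "\<dots> = (\<Sum>l\<in>idx. - \<kappa> * ((- ip g p x) * (lower g x l * q l) + ip g p y * (lower g y l * q l)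
        + (\<Sum>k\<in>idx. p k * sq2 g S k l) * q l))"
    by (intro sum.cong refl) (simp add: pR pU algebra_simps)
  also have "\<dots> = - \<kappa> * (\<Sum>l\<in>idx. (- ip g p x) * (lower g x l * q l) + ip g p y * (lower g y l * q l)
        + (\<Sum>k\<in>idx. p k * sq2 g S k l) * q l)"
    by (simp only: sum_distrib_left)
  also have "\<dots> = - \<kappa> * ((- ip g p x) * (\<Sum>l\<in>idx. lower g x l * q l) + ip g p y * (\<Sum>l\<in>idx. lower g y l * q l)
        + (\<Sum>l\<in>idx. (\<Sum>k\<in>idx. p k * sq2 g S k l) * q l))"
    by (simp only: sum.distrib sum_distrib_left)
  also have "\<dots> = - \<kappa> * (- ip g p x * ip g x q + ip g p y * ip g y q - ip g (cv p) (cv q))"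
    by (simp add: ip_lower'[symmetric] pSq)
  finally show ?thesis .
qed

lemma cv_perp_x: "ip g x (cv q) = 0"
proof -
  have "ip g x (cv q) = (\<Sum>a\<in>idx. \<Sum>j\<in>idx. lower g x a * gi a j * sv q j)"
    unfolding ip_lower' cv_def by (simp add: sum_distrib_left mult.assoc)
  also have "\<dots> = (\<Sum>j\<in>idx. (\<Sum>a\<in>idx. lower g x a * gi a j) * sv q j)"
    by (subst sum.swap) (simp add: sum_distrib_right)
  also have "\<dots> = (\<Sum>j\<in>idx. x j * sv q j)" by (intro sum.cong refl) (simp add: raise_lower')
  also have "\<dots> = (\<Sum>k\<in>idx. q k * (\<Sum>j\<in>idx. S k j * x j))"
    unfolding sv_def sum_distrib_left by (subst sum.swap) (simp add: mult_ac)
  also have "\<dots> = 0" by (simp add: sig_xr)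
  finally show ?thesis .
qed

lemma sv_x: "sv x j = 0" unfolding sv_def by (rule sig_xl)
lemma sv_y: "sv y j = 0" unfolding sv_def by (rule sig_yl)

lemma sv_comb: "sv (\<lambda>i. b i + s * x i + t * y i) j = sv b j"
proof -
  have "sv (\<lambda>i. b i + s * x i + t * y i) j = sv b j + s * sv x j + t * sv y j"
    unfolding sv_def by (simp add: sum.distrib sum_distrib_left algebra_simps)
  thus ?thesis by (simp add: sv_x sv_y)
qed

lemma cv_comb: "cv (\<lambda>i. b i + s * x i + t * y i) m = cv b m"
  unfolding cv_def by (simp add: sv_comb)

lemma cv_x: "cv x m = 0" unfolding cv_def by (simp add: sv_x)
lemma cv_y: "cv y m = 0" unfolding cv_def by (simp add: sv_y)

end


context met
begin
lemma ip_comb2: "ip g u (\<lambda>i. b i + s * v i + t * w i) = ip g u b + s * ip g u v + t * ip g u w"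
  unfolding ip_def by (simp add: sum.distrib sum_distrib_left algebra_simps)
lemma ip_comb1: "ip g (\<lambda>i. b i + s * v i + t * w i) u = ip g b u + s * ip g v u + t * ip g w u"
  unfolding ip_def by (simp add: sum.distrib sum_distrib_left algebra_simps)
lemma ip_zero2: "ip g u (\<lambda>i. 0) = 0" unfolding ip_def by simp
end

context emR
begin

lemma cv_x_fun: "cv x = (\<lambda>i. 0)" using cv_x by (intro ext) simp
lemma cv_y_fun: "cv y = (\<lambda>i. 0)" using cv_y by (intro ext) simp

lemma Rb_x: "Rb p x = - \<kappa> * ip g p x"
  by (simp add: Rb_formula cv_x_fun ip_zero2 xx yx)
lemma Rb_y: "Rb p y = - \<kappa> * ip g p y"
  by (simp add: Rb_formula cv_y_fun ip_zero2 yy xy)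

lemma eig_fac:
  assumes "\<forall>w. Rb p w = \<mu> * ip g w p"
  shows "(\<kappa> + \<mu>) * ip g x p = 0" "(\<kappa> + \<mu>) * ip g y p = 0"
proof -
  have "- \<kappa> * ip g p x = \<mu> * ip g x p" using assms Rb_x by metis
  thus "(\<kappa> + \<mu>) * ip g x p = 0" using ip_sym[of p x] by (simp add: algebra_simps)
  have "- \<kappa> * ip g p y = \<mu> * ip g y p" using assms Rb_y by metis
  thus "(\<kappa> + \<mu>) * ip g y p = 0" using ip_sym[of p y] by (simp add: algebra_simps)
qed

lemma eig_case:
  assumes kp: "\<kappa> > 0" and Rp: "\<forall>w. Rb p w = - \<kappa> * ip g w p"
  shows "\<forall>i<4. p i = - ip g x p * x i + ip g y p * y i"
proof -
  define \<alpha> where "\<alpha> = - ip g x p"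
  define \<beta> where "\<beta> = ip g y p"
  define b where "b i = p i - \<alpha> * x i - \<beta> * y i" for i
  have pb: "p = (\<lambda>i. b i + \<alpha> * x i + \<beta> * y i)" unfolding b_def by (intro ext) simp
  have xb: "ip g x b = 0"
  proof -
    have "ip g x p = ip g x b + \<alpha> * ip g x x + \<beta> * ip g x y" by (subst pb) (rule ip_comb2)
    thus ?thesis by (simp add: xx xy \<alpha>_def)
  qed
  have yb: "ip g y b = 0"
  proof -
    have "ip g y p = ip g y b + \<alpha> * ip g y x + \<beta> * ip g y y" by (subst pb) (rule ip_comb2)
    thus ?thesis by (simp add: yy yx \<beta>_def)
  qed
  have bp: "ip g b p = ip g b b"
  proof -
    have "ip g b p = ip g b b + \<alpha> * ip g b x + \<beta> * ip g b y" by (subst pb) (rule ip_comb2)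
    thus ?thesis using xb yb ip_sym[of b x] ip_sym[of b y] by simp
  qed
  have cvp: "cv p = cv b" by (subst pb) (intro ext, rule cv_comb)
  have "Rb p b = - \<kappa> * (- ip g p x * ip g x b + ip g p y * ip g y b - ip g (cv p) (cv b))"
    by (rule Rb_formula)
  hence "Rb p b = \<kappa> * ip g (cv b) (cv b)" using xb yb cvp by simp
  moreover have "Rb p b = - \<kappa> * ip g b b" using Rp bp by simp
  ultimately have e: "\<kappa> * (ip g (cv b) (cv b) + ip g b b) = 0" by (simp add: algebra_simps)
  have p1: "0 \<le> ip g (cv b) (cv b)" using pos[OF xx cv_perp_x] by blast
  have p2: "0 \<le> ip g b b" and p3: "ip g b b = 0 \<longrightarrow> (\<forall>i<4. b i = 0)" using pos[OF xx xb] by blast+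
  have "ip g (cv b) (cv b) + ip g b b = 0" using e kp by simp
  hence "ip g b b = 0" using p1 p2 by linarith
  hence "\<forall>i<4. b i = 0" using p3 by blast
  thus ?thesis unfolding b_def \<alpha>_def \<beta>_def by (simp add: algebra_simps)
qed

lemma back_core:
  assumes kp: "\<kappa> > 0"
    and x'x': "ip g x' x' = -1" and y'y': "ip g y' y' = 1" and x'y': "ip g x' y' = 0"
    and F: "\<forall>u v. ip g u x' * Rb y' v - ip g u y' * Rb x' v + ip g v x' * Rb y' u - ip g v y' * Rb x' u = 0"
  shows "\<forall>i<4. x' i = - ip g x x' * x i + ip g y x' * y i"
    and "\<forall>i<4. y' i = - ip g x y' * x i + ip g y y' * y i"
proof -
  have y'x': "ip g y' x' = 0" using x'y' ip_sym by simp
  have Rbs: "Rb p q = Rb q p" for p q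
    unfolding Rb_formula using ip_sym[of p x] ip_sym[of q x] ip_sym[of p y] ip_sym[of q y] ip_sym[of "cv p" "cv q"]
    by (simp add: algebra_simps)
  have "Rb y' x' = 0" using F[rule_format, of x' x'] x'x' x'y' by simp
  define \<mu> where "\<mu> = Rb y' y'"
  have Rx: "\<forall>w. Rb x' w = \<mu> * ip g w x'"
  proof
    fix w
    have "ip g y' x' * Rb y' w - ip g y' y' * Rb x' w + ip g w x' * Rb y' y' - ip g w y' * Rb x' y' = 0"
      using F by blast
    thus "Rb x' w = \<mu> * ip g w x'" using y'x' y'y' Rbs[of x' y'] \<open>Rb y' x' = 0\<close> by (simp add: \<mu>_def mult.commute)
  qed
  have Ry: "\<forall>w. Rb y' w = \<mu> * ip g w y'"
  proof
    fix w
    have "ip g x' x' * Rb y' w - ip g x' y' * Rb x' w + ip g w x' * Rb y' x' - ip g w y' * Rb x' x' = 0"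
      using F by blast
    moreover have "Rb x' x' = - \<mu>" using Rx x'x' by simp
    ultimately show "Rb y' w = \<mu> * ip g w y'" using x'x' x'y' \<open>Rb y' x' = 0\<close> by (simp add: mult.commute)
  qed
  have mu: "\<mu> = - \<kappa>"
  proof (rule ccontr)
    assume "\<mu> \<noteq> - \<kappa>"
    hence nz: "\<kappa> + \<mu> \<noteq> 0" by simp
    have "ip g x x' = 0" using eig_fac(1)[OF Rx] nz by simp
    hence "0 \<le> ip g x' x'" using pos[OF xx] by blast
    thus False using x'x' by simp
  qed
  show "\<forall>i<4. x' i = - ip g x x' * x i + ip g y x' * y i" using eig_case[OF kp] Rx mu by simp
  show "\<forall>i<4. y' i = - ip g x y' * x i + ip g y y' * y i" using eig_case[OF kp] Ry mu by simp
qed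

end


context emR
begin

lemma uU: "m<4 \<Longrightarrow> (\<forall>a<4. \<forall>b<4. U' a b = lower g x' a * lower g y' b - lower g y' a * lower g x' b) \<Longrightarrow>
   (\<Sum>n\<in>idx. u n * U' n m) = ip g u x' * lower g y' m - ip g u y' * lower g x' m"
proof -
  assume m: "m<4" and U': "\<forall>a<4. \<forall>b<4. U' a b = lower g x' a * lower g y' b - lower g y' a * lower g x' b"
  have "(\<Sum>n\<in>idx. u n * U' n m) = (\<Sum>n\<in>idx. (u n * lower g x' n) * lower g y' m - (u n * lower g y' n) * lower g x' m)"
    by (intro sum.cong refl) (simp add: U' m algebra_simps)
  also have "\<dots> = ip g u x' * lower g y' m - ip g u y' * lower g x' m"
    by (simp add: sum_subtractf sum_distrib_right[symmetric] ip_lower)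
  finally show ?thesis .
qed

lemma contr:
  assumes U': "\<forall>a<4. \<forall>b<4. U' a b = lower g x' a * lower g y' b - lower g y' a * lower g x' b"
  shows "(\<Sum>n\<in>idx. \<Sum>l\<in>idx. u n * v l * (\<Sum>m\<in>idx. \<Sum>k\<in>idx. gi m k * R k l * U' n m))
     = ip g u x' * Rb y' v - ip g u y' * Rb x' v"
proof -
  have "(\<Sum>n\<in>idx. \<Sum>l\<in>idx. u n * v l * (\<Sum>m\<in>idx. \<Sum>k\<in>idx. gi m k * R k l * U' n m))
      = (\<Sum>n\<in>idx. \<Sum>l\<in>idx. \<Sum>m\<in>idx. \<Sum>k\<in>idx. (u n * U' n m) * gi m k * (R k l * v l))"
    by (simp add: sum_distrib_left mult_ac)
  also have "\<dots> = (\<Sum>m\<in>idx. \<Sum>k\<in>idx. \<Sum>n\<in>idx. \<Sum>l\<in>idx. (u n * U' n m) * gi m k * (R k l * v l))"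
    by (rule swap4)
  also have "\<dots> = (\<Sum>m\<in>idx. \<Sum>k\<in>idx. (\<Sum>n\<in>idx. u n * U' n m) * gi m k * (\<Sum>l\<in>idx. R k l * v l))"
    apply (simp add: sum_distrib_left sum_distrib_right)
    apply (rule sum.cong[OF refl], rule sum.cong[OF refl], rule sum.swap)
    done
  also have "\<dots> = (\<Sum>m\<in>idx. \<Sum>k\<in>idx. (ip g u x' * lower g y' m - ip g u y' * lower g x' m) * gi m k * (\<Sum>l\<in>idx. R k l * v l))"
    by (intro sum.cong refl) (simp add: uU[OF _ U'])
  also have "\<dots> = (\<Sum>k\<in>idx. (\<Sum>m\<in>idx. (ip g u x' * lower g y' m - ip g u y' * lower g x' m) * gi m k) * (\<Sum>l\<in>idx. R k l * v l))"
    by (subst sum.swap) (simp add: sum_distrib_right)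
  also have "\<dots> = (\<Sum>k\<in>idx. (ip g u x' * y' k - ip g u y' * x' k) * (\<Sum>l\<in>idx. R k l * v l))"
  proof (rule sum.cong[OF refl])
    fix k assume k: "k \<in> idx"
    have "(\<Sum>m\<in>idx. (ip g u x' * lower g y' m - ip g u y' * lower g x' m) * gi m k)
       = ip g u x' * (\<Sum>m\<in>idx. lower g y' m * gi m k) - ip g u y' * (\<Sum>m\<in>idx. lower g x' m * gi m k)"
      by (simp add: left_diff_distrib sum_subtractf sum_distrib_left mult.assoc)
    also have "\<dots> = ip g u x' * y' k - ip g u y' * x' k" using k by (simp add: raise_lower')
    finally show "(\<Sum>m\<in>idx. (ip g u x' * lower g y' m - ip g u y' * lower g x' m) * gi m k) * (\<Sum>l\<in>idx. R k l * v l)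
       = (ip g u x' * y' k - ip g u y' * x' k) * (\<Sum>l\<in>idx. R k l * v l)" by simp
  qed
  also have "\<dots> = ip g u x' * (\<Sum>k\<in>idx. y' k * (\<Sum>l\<in>idx. R k l * v l))
       - ip g u y' * (\<Sum>k\<in>idx. x' k * (\<Sum>l\<in>idx. R k l * v l))"
    by (simp add: left_diff_distrib sum_subtractf sum_distrib_left mult.assoc)
  also have "\<dots> = ip g u x' * Rb y' v - ip g u y' * Rb x' v"
    unfolding Rb_def by (simp add: sum_distrib_left mult.assoc)
  finally show ?thesis .
qed

end


lemma cx:
  fixes A A' B B' C C' :: "nat \<Rightarrow> nat \<Rightarrow> real" and s :: real
  shows "(\<Sum>m\<in>I. \<Sum>k\<in>I. complex_of_real (A m k) * ((complex_of_real (B m k) - \<i> * complex_of_real (C m k)) / complex_of_real s)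
        + complex_of_real (A' m k) * ((complex_of_real (B' m k) - \<i> * complex_of_real (C' m k)) / complex_of_real s))
     = (complex_of_real (\<Sum>m\<in>I. \<Sum>k\<in>I. A m k * B m k + A' m k * B' m k)
        - \<i> * complex_of_real (\<Sum>m\<in>I. \<Sum>k\<in>I. A m k * C m k + A' m k * C' m k)) / complex_of_real s"
  by (simp add: sum_divide_distrib sum_subtractf sum.distrib sum_distrib_left algebra_simps diff_divide_distrib add_divide_distrib)

lemma cx_zero:
  fixes a b s :: real
  assumes "s \<noteq> 0" "(complex_of_real a - \<i> * complex_of_real b) / complex_of_real s = 0"
  shows "a = 0" "b = 0"
proof -
  have "complex_of_real a - \<i> * complex_of_real b = 0" using assms by simp
  hence "Re (complex_of_real a - \<i> * complex_of_real b) = 0" "Im (complex_of_real a - \<i> * complex_of_real b) = 0" by simp_all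
  thus "a = 0" "b = 0" by simp_all
qed



lemma plane_eq:
  fixes x y x' y' :: "nat \<Rightarrow> real"
  assumes xs: "\<forall>i<4. x' i = \<alpha> * x i + \<beta> * y i" and ys: "\<forall>i<4. y' i = \<gamma> * x i + \<delta> * y i"
    and D: "\<alpha> * \<delta> - \<beta> * \<gamma> \<noteq> 0"
  shows "\<forall>v. in_plane x y v \<longleftrightarrow> in_plane x' y' v"
proof
  fix v
  show "in_plane x y v \<longleftrightarrow> in_plane x' y' v"
  proof
    assume "in_plane x y v"
    then obtain s t where st: "\<forall>i<4. v i = s * x i + t * y i" unfolding in_plane_def by blast
    define D where "D = \<alpha> * \<delta> - \<beta> * \<gamma>"
    have "\<forall>i<4. v i = ((s * \<delta> - t * \<gamma>) / D) * x' i + ((t * \<alpha> - s * \<beta>) / D) * y' i"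
    proof (intro allI impI)
      fix i :: nat assume i: "i < 4"
      have "((s * \<delta> - t * \<gamma>) / D) * x' i + ((t * \<alpha> - s * \<beta>) / D) * y' i
          = ((s * \<delta> - t * \<gamma>) * (\<alpha> * x i + \<beta> * y i) + (t * \<alpha> - s * \<beta>) * (\<gamma> * x i + \<delta> * y i)) / D"
        using xs ys i by (simp add: add_divide_distrib)
      also have "\<dots> = (D * (s * x i + t * y i)) / D" unfolding D_def by (simp add: algebra_simps)
      also have "\<dots> = s * x i + t * y i" using D unfolding D_def by simp
      finally show "v i = ((s * \<delta> - t * \<gamma>) / D) * x' i + ((t * \<alpha> - s * \<beta>) / D) * y' i" using st i by simp
    qed
    thus "in_plane x' y' v" unfolding in_plane_def by blast
  next
    assume "in_plane x' y' v"
    then obtain s t where st: "\<forall>i<4. v i = s * x' i + t * y' i" unfolding in_plane_def by blast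
    have "\<forall>i<4. v i = (s * \<alpha> + t * \<gamma>) * x i + (s * \<beta> + t * \<delta>) * y i"
      using st xs ys by (simp add: algebra_simps)
    thus "in_plane x y v" unfolding in_plane_def by blast
  qed
qed

lemma det_one:
  fixes \<alpha> \<beta> \<gamma> \<delta> :: real
  assumes "- \<alpha> * \<alpha> + \<beta> * \<beta> = -1" "- \<gamma> * \<gamma> + \<delta> * \<delta> = 1" "- \<alpha> * \<gamma> + \<beta> * \<delta> = 0"
  shows "\<alpha> * \<delta> - \<beta> * \<gamma> \<noteq> 0"
proof -
  have "(\<alpha> * \<delta> - \<beta> * \<gamma>) * (\<alpha> * \<delta> - \<beta> * \<gamma>)
     = (\<alpha> * \<alpha> - \<beta> * \<beta>) * (\<delta> * \<delta> - \<gamma> * \<gamma>) + (\<alpha> * \<gamma> - \<beta> * \<delta>) * (\<alpha> * \<gamma> - \<beta> * \<delta>)"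
    by (simp add: algebra_simps)
  also have "\<dots> = 1"
  proof -
    have "\<alpha> * \<alpha> - \<beta> * \<beta> = 1" "\<delta> * \<delta> - \<gamma> * \<gamma> = 1" "\<alpha> * \<gamma> - \<beta> * \<delta> = 0" using assms by linarith+
    thus ?thesis by simp
  qed
  finally show ?thesis by auto
qed



theorem lemma4:
  fixes g R :: tens2 and W :: "real tens4"
    and \<kappa> :: real and U x y :: "_" and \<rho> :: complex and U' x' y' :: "_"
  assumes "lorentzian g"
    and "\<forall>a<4. \<forall>b<4. R a b = R b a"
    and "weyl_tensor g W"
    and "nonnull_em g R \<kappa> U x y"
    and "typeD g W \<rho> U' x' y'"
  shows "(\<forall>v. in_plane x y v \<longleftrightarrow> in_plane x' y' v) \<longleftrightarrow>
    (inv_a g W \<noteq> 0 \<and>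
     (let P = (\<lambda>a b c d. sdW g W a b c d + (inv_b g W / inv_a g W) * calG g a b c d) in
      \<forall>l<4. \<forall>n<4. \<forall>c<4. \<forall>d<4.
        (\<Sum>m\<in>idx. \<Sum>k\<in>idx. complex_of_real (ginv g m k * R k l) * P n m c d
                           + complex_of_real (ginv g m k * R k n) * P l m c d) = 0))"
proof -
  note gp = ginv_props[OF assms(1)]
  note sp = spacelike_perp[OF assms(1)]
  from assms(4) have kp: "\<kappa> > 0" and tv: "timelike_volume_form g U x y"
    and Rf: "\<forall>a<4. \<forall>b<4. R a b = - \<kappa> * (sq2 g U a b - (- sq2 g (hodge2 g U) a b))"
    unfolding nonnull_em_def by blast+
  from tv have xx: "ip g x x = -1" and yy: "ip g y y = 1" and xy: "ip g x y = 0"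
    and Uw: "\<forall>a<4. \<forall>b<4. U a b = wedge1 (lower g x) (lower g y) a b"
    unfolding timelike_volume_form_def by blast+
  interpret F: frm g "ginv g" x y U
    apply unfold_locales
    using gp sp xx yy xy Uw by (auto simp: wedge1_def)
  interpret E: emR g "ginv g" x y U R \<kappa>
    apply unfold_locales
    using Rf assms(2) F.hodge_U_fun by auto
  from assms(5) have tv': "timelike_volume_form g U' x' y'" and an: "inv_a g W \<noteq> 0"
    and rho: "\<rho> = - inv_b g W / inv_a g W"
    and sd0: "let cU = (\<lambda>a b. (complex_of_real (U' a b) - \<i> * complex_of_real (hodge2 g U' a b))
                      / complex_of_real (sqrt 2)) in
      \<forall>a<4. \<forall>b<4. \<forall>c<4. \<forall>d<4.
        sdW g W a b c d = 3 * \<rho> * cU a b * cU c d + \<rho> * calG g a b c d"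
    unfolding typeD_def by blast+
  from tv' have x'x': "ip g x' x' = -1" and y'y': "ip g y' y' = 1" and x'y': "ip g x' y' = 0"
    and U'w0: "\<forall>a<4. \<forall>b<4. U' a b = wedge1 (lower g x') (lower g y') a b"
    unfolding timelike_volume_form_def by blast+
  have U'w: "\<forall>a<4. \<forall>b<4. U' a b = lower g x' a * lower g y' b - lower g y' a * lower g x' b"
    using U'w0 by (simp add: wedge1_def)
  define S' where "S' = hodge2 g U'"
  define cU where "cU a b = (complex_of_real (U' a b) - \<i> * complex_of_real (S' a b)) / complex_of_real (sqrt 2)" for a b
  have sd: "\<forall>a<4. \<forall>b<4. \<forall>c<4. \<forall>d<4. sdW g W a b c d = 3 * \<rho> * cU a b * cU c d + \<rho> * calG g a b c d"
    using sd0 unfolding Let_def cU_def S'_def .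
  have ba: "inv_b g W / inv_a g W = - \<rho>" using rho an by simp
  have Pv: "sdW g W a b c d + (inv_b g W / inv_a g W) * calG g a b c d = 3 * \<rho> * cU a b * cU c d"
    if "a<4" "b<4" "c<4" "d<4" for a b c d
    using sd that ba by simp
  have rho0: "\<rho> \<noteq> 0"
  proof
    assume r0: "\<rho> = 0"
    have z: "\<And>a b c d. a<4 \<Longrightarrow> b<4 \<Longrightarrow> c<4 \<Longrightarrow> d<4 \<Longrightarrow> sdW g W a b c d = 0" using sd r0 by simp
    have cz: "comp g (sdW g W) (sdW g W) a b r s = 0" if "a<4" "b<4" for a b r s
      unfolding comp_def by (auto intro!: sum.neutral simp: z that)
    have "inv_a g W = 0"
      unfolding inv_a_def trace4_def by (auto intro!: sum.neutral simp: cz)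
    thus False using an by simp
  qed
  have "\<exists>c<4. \<exists>d<4. U' c d \<noteq> 0"
  proof (rule ccontr)
    assume "\<not> ?thesis"
    hence z: "\<And>c d. c<4 \<Longrightarrow> d<4 \<Longrightarrow> U' c d = 0" by auto
    have "(\<Sum>d\<in>idx. (\<Sum>c\<in>idx. x' c * U' c d) * y' d) = (\<Sum>d\<in>idx. (ip g x' x' * lower g y' d - ip g x' y' * lower g x' d) * y' d)"
      by (intro sum.cong refl) (simp add: E.uU[OF _ U'w])
    also have "\<dots> = (\<Sum>d\<in>idx. - (lower g y' d * y' d))" using x'x' x'y' by simp
    also have "\<dots> = - ip g y' y'" by (simp add: F.ip_lower' sum_negf)
    finally have "(\<Sum>d\<in>idx. (\<Sum>c\<in>idx. x' c * U' c d) * y' d) = -1" using y'y' by simp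
    moreover have "(\<Sum>d\<in>idx. (\<Sum>c\<in>idx. x' c * U' c d) * y' d) = 0"
    proof -
      have inner: "\<forall>d<4. (\<Sum>c\<in>idx. x' c * U' c d) = 0" by (auto intro!: sum.neutral simp: z)
      thus ?thesis by (auto intro!: sum.neutral)
    qed
    ultimately show False by simp
  qed
  then obtain c0 d0 where cd0: "c0 < 4" "d0 < 4" "U' c0 d0 \<noteq> 0" by blast
  have cU0: "cU c0 d0 \<noteq> 0"
  proof
    assume "cU c0 d0 = 0"
    hence "U' c0 d0 = 0" using cx_zero(1)[of "sqrt 2" "U' c0 d0" "S' c0 d0"] unfolding cU_def by simp
    thus False using cd0 by simp
  qed
  define TU where "TU l n = (\<Sum>m\<in>idx. \<Sum>k\<in>idx. ginv g m k * R k l * U' n m + ginv g m k * R k n * U' l m)" for l n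
  define TS where "TS l n = (\<Sum>m\<in>idx. \<Sum>k\<in>idx. ginv g m k * R k l * S' n m + ginv g m k * R k n * S' l m)" for l n
  have key: "(\<Sum>m\<in>idx. \<Sum>k\<in>idx. complex_of_real (ginv g m k * R k l) * (sdW g W n m c d + (inv_b g W / inv_a g W) * calG g n m c d)
                 + complex_of_real (ginv g m k * R k n) * (sdW g W l m c d + (inv_b g W / inv_a g W) * calG g l m c d))
        = 3 * \<rho> * cU c d * ((complex_of_real (TU l n) - \<i> * complex_of_real (TS l n)) / complex_of_real (sqrt 2))"
    if "l<4" "n<4" "c<4" "d<4" for l n c d
  proof -
    have "(\<Sum>m\<in>idx. \<Sum>k\<in>idx. complex_of_real (ginv g m k * R k l) * (sdW g W n m c d + (inv_b g W / inv_a g W) * calG g n m c d)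
                 + complex_of_real (ginv g m k * R k n) * (sdW g W l m c d + (inv_b g W / inv_a g W) * calG g l m c d))
       = (\<Sum>m\<in>idx. \<Sum>k\<in>idx. (3 * \<rho> * cU c d) * (complex_of_real (ginv g m k * R k l) * cU n m
                 + complex_of_real (ginv g m k * R k n) * cU l m))"
    proof (intro sum.cong refl)
      fix m k assume m: "m \<in> idx"
      have "sdW g W n m c d + (inv_b g W / inv_a g W) * calG g n m c d = 3 * \<rho> * cU n m * cU c d"
        using Pv that m by simp
      moreover have "sdW g W l m c d + (inv_b g W / inv_a g W) * calG g l m c d = 3 * \<rho> * cU l m * cU c d"
        using Pv that m by simp
      ultimately show "complex_of_real (ginv g m k * R k l) * (sdW g W n m c d + (inv_b g W / inv_a g W) * calG g n m c d)
                 + complex_of_real (ginv g m k * R k n) * (sdW g W l m c d + (inv_b g W / inv_a g W) * calG g l m c d)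
         = (3 * \<rho> * cU c d) * (complex_of_real (ginv g m k * R k l) * cU n m
                 + complex_of_real (ginv g m k * R k n) * cU l m)"
        by (simp only:) (simp add: algebra_simps)
    qed
    also have "\<dots> = (3 * \<rho> * cU c d) * (\<Sum>m\<in>idx. \<Sum>k\<in>idx. complex_of_real (ginv g m k * R k l) * cU n m
                 + complex_of_real (ginv g m k * R k n) * cU l m)"
      by (simp add: sum_distrib_left)
    also have "(\<Sum>m\<in>idx. \<Sum>k\<in>idx. complex_of_real (ginv g m k * R k l) * cU n m
                 + complex_of_real (ginv g m k * R k n) * cU l m)
        = (complex_of_real (TU l n) - \<i> * complex_of_real (TS l n)) / complex_of_real (sqrt 2)"
      unfolding cU_def TU_def TS_def
      using cx[of "\<lambda>m k. ginv g m k * R k l" "\<lambda>m k. U' n m" "\<lambda>m k. S' n m" "sqrt 2"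
                  "\<lambda>m k. ginv g m k * R k n" "\<lambda>m k. U' l m" "\<lambda>m k. S' l m" idx]
      by simp
    finally show ?thesis .
  qed
  show ?thesis
  proof
    assume planes: "\<forall>v. in_plane x y v \<longleftrightarrow> in_plane x' y' v"
    have "in_plane x' y' x'" unfolding in_plane_def by (rule exI[of _ 1], rule exI[of _ 0]) simp
    hence "in_plane x y x'" using planes by blast
    then obtain \<alpha> \<beta> where xa: "\<forall>i<4. x' i = \<alpha> * x i + \<beta> * y i" unfolding in_plane_def by blast
    have "in_plane x' y' y'" unfolding in_plane_def by (rule exI[of _ 0], rule exI[of _ 1]) simp
    hence "in_plane x y y'" using planes by blast
    then obtain \<gamma> \<delta> where ya: "\<forall>i<4. y' i = \<gamma> * x i + \<delta> * y i" unfolding in_plane_def by blast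
    define D where "D = \<alpha> * \<delta> - \<beta> * \<gamma>"
    have lx: "lower g x' a = \<alpha> * lower g x a + \<beta> * lower g y a" for a
    proof -
      have "lower g x' a = lower g (\<lambda>i. \<alpha> * x i + \<beta> * y i) a" by (rule F.lower_cong) (use xa in auto)
      thus ?thesis by (simp add: F.lower_lin)
    qed
    have ly: "lower g y' a = \<gamma> * lower g x a + \<delta> * lower g y a" for a
    proof -
      have "lower g y' a = lower g (\<lambda>i. \<gamma> * x i + \<delta> * y i) a" by (rule F.lower_cong) (use ya in auto)
      thus ?thesis by (simp add: F.lower_lin)
    qed
    have U'D: "U' a b = D * U a b" if "a<4" "b<4" for a b
    proof -
      have e1: "U' a b = lower g x' a * lower g y' b - lower g y' a * lower g x' b" using U'w that by simp
      have e2: "U a b = lower g x a * lower g y b - lower g y a * lower g x b" using F.Uw[OF that] .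
      show ?thesis unfolding e1 e2 lx ly D_def by (simp add: algebra_simps)
    qed
    have S'D: "S' a b = D * sig g x y a b" for a b
    proof -
      have "S' a b = 1/2 * (\<Sum>k\<in>idx. \<Sum>l\<in>idx. \<Sum>m\<in>idx. \<Sum>n\<in>idx. D * (vol g a b k l * ginv g k m * ginv g l n * U m n))"
        unfolding S'_def hodge2_def by (intro arg_cong[where f="\<lambda>t. 1/2 * t"] sum.cong refl) (simp add: U'D)
      also have "\<dots> = D * hodge2 g U a b" unfolding hodge2_def by (simp add: sum_distrib_left)
      finally show ?thesis by (simp add: F.hodge_U)
    qed
    have TU0: "TU l n = 0" if "l<4" "n<4" for l n
    proof -
      have "TU l n = D * (\<Sum>m\<in>idx. \<Sum>k\<in>idx. ginv g m k * R k l * U n m) + D * (\<Sum>m\<in>idx. \<Sum>k\<in>idx. ginv g m k * R k n * U l m)"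
        unfolding TU_def sum_distrib_left sum.distrib[symmetric]
        by (intro sum.cong refl) (simp add: U'D that algebra_simps)
      also have "\<dots> = D * (- \<kappa> * U n l) + D * (- \<kappa> * U l n)" using that by (simp add: E.UgR)
      also have "\<dots> = 0"
      proof -
        have "U n l = - U l n" using F.Uw[OF that] F.Uw[of n l] that by simp
        thus ?thesis by (simp add: algebra_simps)
      qed
      finally show ?thesis .
    qed
    have TS0: "TS l n = 0" if "l<4" "n<4" for l n
    proof -
      have "TS l n = D * ((\<Sum>m\<in>idx. \<Sum>k\<in>idx. ginv g m k * R k l * sig g x y n m) + (\<Sum>m\<in>idx. \<Sum>k\<in>idx. ginv g m k * R k n * sig g x y l m))"
        unfolding TS_def distrib_left sum_distrib_left sum.distrib[symmetric]
        by (intro sum.cong refl) (simp add: S'D algebra_simps)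
      also have "\<dots> = 0" using that E.SgR by simp
      finally show ?thesis .
    qed
    show "inv_a g W \<noteq> 0 \<and>
     (let P = (\<lambda>a b c d. sdW g W a b c d + (inv_b g W / inv_a g W) * calG g a b c d) in
      \<forall>l<4. \<forall>n<4. \<forall>c<4. \<forall>d<4.
        (\<Sum>m\<in>idx. \<Sum>k\<in>idx. complex_of_real (ginv g m k * R k l) * P n m c d
                           + complex_of_real (ginv g m k * R k n) * P l m c d) = 0)"
      unfolding Let_def using an key TU0 TS0 by simp
  next
    assume rhs: "inv_a g W \<noteq> 0 \<and>
     (let P = (\<lambda>a b c d. sdW g W a b c d + (inv_b g W / inv_a g W) * calG g a b c d) in
      \<forall>l<4. \<forall>n<4. \<forall>c<4. \<forall>d<4.
        (\<Sum>m\<in>idx. \<Sum>k\<in>idx. complex_of_real (ginv g m k * R k l) * P n m c d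
                           + complex_of_real (ginv g m k * R k n) * P l m c d) = 0)"
    have TU0: "TU l n = 0" if "l<4" "n<4" for l n
    proof -
      have R2: "\<forall>l<4. \<forall>n<4. \<forall>c<4. \<forall>d<4.
        (\<Sum>m\<in>idx. \<Sum>k\<in>idx. complex_of_real (ginv g m k * R k l) * (sdW g W n m c d + (inv_b g W / inv_a g W) * calG g n m c d)
                 + complex_of_real (ginv g m k * R k n) * (sdW g W l m c d + (inv_b g W / inv_a g W) * calG g l m c d)) = 0"
        using rhs unfolding Let_def by (elim conjE) assumption
      have z: "(\<Sum>m\<in>idx. \<Sum>k\<in>idx. complex_of_real (ginv g m k * R k l) * (sdW g W n m c0 d0 + (inv_b g W / inv_a g W) * calG g n m c0 d0)
                 + complex_of_real (ginv g m k * R k n) * (sdW g W l m c0 d0 + (inv_b g W / inv_a g W) * calG g l m c0 d0)) = 0"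
        using R2[rule_format, OF that cd0(1,2)] .
      have "3 * \<rho> * cU c0 d0 * ((complex_of_real (TU l n) - \<i> * complex_of_real (TS l n)) / complex_of_real (sqrt 2)) = 0"
        using z by (simp only: key[OF that cd0(1,2)])
      moreover have nz: "3 * \<rho> * cU c0 d0 \<noteq> 0" using rho0 cU0 by simp
      ultimately have h: "(complex_of_real (TU l n) - \<i> * complex_of_real (TS l n)) / complex_of_real (sqrt 2) = 0"
        by (metis mult_eq_0_iff)
      show ?thesis by (rule cx_zero(1)[OF _ h]) simp
    qed
    define T1 where "T1 l n = (\<Sum>m\<in>idx. \<Sum>k\<in>idx. ginv g m k * R k l * U' n m)" for l n
    have TT: "TU l n = T1 l n + T1 n l" for l n unfolding TU_def T1_def by (simp add: sum.distrib)
    have Fc: "\<forall>u v. ip g u x' * E.Rb y' v - ip g u y' * E.Rb x' v + ip g v x' * E.Rb y' u - ip g v y' * E.Rb x' u = 0"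
    proof (intro allI)
      fix u v :: "nat \<Rightarrow> real"
      have "0 = (\<Sum>n\<in>idx. \<Sum>l\<in>idx. u n * v l * TU l n)"
        by (rule sym, intro sum.neutral ballI) (simp add: TU0)
      also have "\<dots> = (\<Sum>n\<in>idx. \<Sum>l\<in>idx. u n * v l * T1 l n) + (\<Sum>n\<in>idx. \<Sum>l\<in>idx. u n * v l * T1 n l)"
        by (simp add: TT distrib_left sum.distrib)
      also have "(\<Sum>n\<in>idx. \<Sum>l\<in>idx. u n * v l * T1 n l) = (\<Sum>n\<in>idx. \<Sum>l\<in>idx. v n * u l * T1 l n)"
        by (subst sum.swap) (simp add: mult_ac)
      finally show "ip g u x' * E.Rb y' v - ip g u y' * E.Rb x' v + ip g v x' * E.Rb y' u - ip g v y' * E.Rb x' u = 0"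
        unfolding T1_def E.contr[OF U'w] by simp
    qed
    have xs: "\<forall>i<4. x' i = - ip g x x' * x i + ip g y x' * y i"
      and ys: "\<forall>i<4. y' i = - ip g x y' * x i + ip g y y' * y i"
      using E.back_core[OF kp x'x' y'y' x'y' Fc] by blast+
    define \<alpha> where "\<alpha> = - ip g x x'"
    define \<beta> where "\<beta> = ip g y x'"
    define \<gamma> where "\<gamma> = - ip g x y'"
    define \<delta> where "\<delta> = ip g y y'"
    have xs': "\<forall>i<4. x' i = \<alpha> * x i + \<beta> * y i" using xs unfolding \<alpha>_def \<beta>_def by simp
    have ys': "\<forall>i<4. y' i = \<gamma> * x i + \<delta> * y i" using ys unfolding \<gamma>_def \<delta>_def by simp
    have i1: "ip g x' x' = \<alpha> * ip g x x' + \<beta> * ip g y x'"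
    proof -
      have "ip g x' x' = ip g (\<lambda>i. \<alpha> * x i + \<beta> * y i) x'" by (rule F.ip_cong1) (use xs' in auto)
      thus ?thesis by (simp add: F.ip_lin1)
    qed
    have i2: "ip g y' y' = \<gamma> * ip g x y' + \<delta> * ip g y y'"
    proof -
      have "ip g y' y' = ip g (\<lambda>i. \<gamma> * x i + \<delta> * y i) y'" by (rule F.ip_cong1) (use ys' in auto)
      thus ?thesis by (simp add: F.ip_lin1)
    qed
    have i3: "ip g x' y' = \<alpha> * ip g x y' + \<beta> * ip g y y'"
    proof -
      have "ip g x' y' = ip g (\<lambda>i. \<alpha> * x i + \<beta> * y i) y'" by (rule F.ip_cong1) (use xs' in auto)
      thus ?thesis by (simp add: F.ip_lin1)
    qed
    have "\<alpha> * \<delta> - \<beta> * \<gamma> \<noteq> 0"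
      apply (rule det_one)
      using i1 i2 i3 x'x' y'y' x'y' unfolding \<alpha>_def \<beta>_def \<gamma>_def \<delta>_def by simp_all
    thus "\<forall>v. in_plane x y v \<longleftrightarrow> in_plane x' y' v" by (rule plane_eq[OF xs' ys'])
  qed
qed


end
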